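(* In $\boldsymbol{k}\{\{x,y\}\}$, up to terms of total degree $\ge5$, \begin{align*} \log_l(\exp_l(x)\exp_l(y)) ={}& x+y+\tfrac12[x,y]\\ &+\tfrac1{12}[x,[x,y]]-\tfrac13\langle x;x,y\rangle-\tfrac1{12}[y,[x,y]]-\tfrac16\langle y;x,y\rangle-\tfrac12\Phi(x;y,y)\\ &-\tfrac1{24}\langle x;x,[x,y]\rangle-\tfrac1{12}[x,\langle x;x,y\rangle]-\tfrac18\langle x,x;x,y\rangle\\ &+\tfrac1{24}[[x,[x,y]],y]-\tfrac1{24}[x,\langle y;x,y\rangle]-\tfrac14\Phi(x,x;y,y)-\tfrac14[x,\Phi(x;y,y)]\\ &-\tfrac1{24}[\langle x;x,y\rangle,y]-\tfrac1{24}\langle x;[x,y],y\rangle-\tfrac16\langle x,y;x,y\rangle+\tfrac1{24}\langle y,x;x,y\rangle\\ &+\tfrac1{12}[\Phi(x;y,y),y]+\tfrac1{24}\langle y;y,[x,y]\rangle-\tfrac1{24}\langle y,y;x,y\rangle-\tfrac16\Phi(x;y,y,y). \end{align*}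
   Context: $\boldsymbol{k}$ is a field of characteristic zero; $\boldsymbol{k}\{\{x,y\}\}$ is the unital algebra of formal power series in two non-associative variables. Powers are left-normed, $u^n:=((uu)\cdots)u$; $\exp_l(u):=\sum_{n\ge0}u^n/n!$, and $\log_l$ is its inverse (from series with constant term $1$ to series with zero constant term). $[a,b]:=ab-ba$. $\Delta,\epsilon$ are the continuous unital algebra homomorphisms with $x,y$ primitive; Sweedler notation $\Delta(u)=\sum u_{(1)}\otimes u_{(2)}$; left division $\backslash$ is the unique bilinear operation with $\sum u_{(1)}\backslash(u_{(2)}v)=\epsilon(u)v=\sum u_{(1)}(u_{(2)}\backslash v)$. Associator $(a,b,c):=(ab)c-a(bc)$. For $\underline{x}:=((x_1x_2)\cdots)x_m$, $\underline{y}:=((y_1y_2)\cdots)y_n$, $p(x_1,\dots,x_m;y_1,\dots,y_n;z):=\sum(\underline{x}_{(1)}\underline{y}_{(1)})\backslash(\underline{x}_{(2)},\underline{y}_{(2)},z)$ (a multilinear non-associative polynomial). For $m\ge1$: $\langle x_1,\dots,x_m;b,c\rangle:=-p(x_1,\dots,x_m;b;c)+p(x_1,\dots,x_m;c;b)$. For $m,n\ge1$: $\Phi(x_1,\dots,x_m;y_1,\dots,y_n;y_{n+1}):=\frac{1}{m!(n+1)!}\sum_{\sigma\in S_m,\,\tau\in S_{n+1}}p(x_{\sigma(1)},\dots,x_{\sigma(m)};y_{\tau(1)},\dots,y_{\tau(n)};y_{\tau(n+1)})$; in the formula, $\Phi(x;y,y)$ means $\Phi(x;y;y)$, $\Phi(x,x;y,y)$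 means $\Phi(x,x;y;y)$ and $\Phi(x;y,y,y)$ means $\Phi(x;y,y;y)$. *)

theory Defs
  imports "HOL-Combinatorics.Permutations"
begin

datatype 'g mag = Leaf 'g | Node "'g mag" "'g mag"

text \<open>A word is either the empty word (None, the unit) or a nonempty binary tree.\<close>
type_synonym 'g word = "'g mag option"

fun wmul :: "'g word \<Rightarrow> 'g word \<Rightarrow> 'g word" where
  "wmul None v = v"
| "wmul u None = u"
| "wmul (Some a) (Some b) = Some (Node a b)"

fun nleaves :: "'g mag \<Rightarrow> nat" where
  "nleaves (Leaf g) = 1"
| "nleaves (Node a b) = nleaves a + nleaves b"

definition wdeg :: "'g word \<Rightarrow> nat" where
  "wdeg w = (case w of None \<Rightarrow> 0 | Some t \<Rightarrow> nleaves t)"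

section \<open>Coproduct: the unital algebra homomorphism with generators primitive\<close>

fun copt :: "'g mag \<Rightarrow> ('g word \<times> 'g word) list" where
  "copt (Leaf g) = [(Some (Leaf g), None), (None, Some (Leaf g))]"
| "copt (Node a b) = concat (map (\<lambda>(a1,a2). map (\<lambda>(b1,b2). (wmul a1 b1, wmul a2 b2)) (copt b)) (copt a))"

definition cop :: "'g word \<Rightarrow> ('g word \<times> 'g word) list" where
  "cop w = (case w of None \<Rightarrow> [(None, None)] | Some t \<Rightarrow> copt t)"

lemma wdeg_wmul: "wdeg (wmul a b) = wdeg a + wdeg b"
  by (cases a; cases b) (auto simp: wdeg_def)

lemma nleaves_pos: "0 < nleaves t"
  by (induction t) auto

lemma copt_deg: "(u1,u2) \<in> set (copt t) \<Longrightarrow> wdeg u1 + wdeg u2 = nleaves t"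
proof (induction t arbitrary: u1 u2)
  case (Leaf g) then show ?case by (auto simp: wdeg_def)
next
  case (Node a b)
  then obtain a1 a2 b1 b2 where "(a1,a2) \<in> set (copt a)" "(b1,b2) \<in> set (copt b)"
    "u1 = wmul a1 b1" "u2 = wmul a2 b2" by auto
  then have "wdeg a1 + wdeg a2 = nleaves a" "wdeg b1 + wdeg b2 = nleaves b"
    using Node.IH by auto
  with \<open>u1 = wmul a1 b1\<close> \<open>u2 = wmul a2 b2\<close> show ?case by (simp add: wdeg_wmul)
qed

lemma cop_deg: "(u1,u2) \<in> set (cop (Some t)) \<Longrightarrow> wdeg u1 + wdeg u2 = wdeg (Some t)"
  using copt_deg by (force simp: cop_def wdeg_def)

type_synonym ('a,'g) lc = "('a \<times> 'g word) list"

text \<open>Left division of words, from the identity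
  sum u_(1) \ (u_(2) v) = eps(u) v: the term with u_(2) = 1 is u \ v itself.\<close>
function ldivw :: "'g word \<Rightarrow> 'g word \<Rightarrow> ('a::comm_ring_1, 'g) lc" where
  "ldivw u w = (if u = None then [(1, w)] else
     concat (map (\<lambda>(u1,u2). map (\<lambda>(c,v). (- c, v)) (ldivw u1 (wmul u2 w)))
               (filter (\<lambda>(u1,u2). u2 \<noteq> None) (cop u))))"
  by pat_completeness auto
termination
proof (relation "measure (\<lambda>(u,w). wdeg u)", simp)
  fix u w x u1 u2
  assume "u \<noteq> (None :: 'g word)" "x \<in> set (filter (\<lambda>(u1,u2). u2 \<noteq> None) (cop u))" "(u1,u2) = x"
  then obtain t where t: "u = Some t" "(u1,u2) \<in> set (cop (Some t))" "u2 \<noteq> None" by auto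
  from t(3) obtain y where "u2 = Some y" by auto
  with cop_deg[OF t(2)] nleaves_pos[of y] have "wdeg u1 < wdeg (Some t)" by (simp add: wdeg_def)
  then show "((u1, wmul u2 w), u, w) \<in> measure (\<lambda>(u,w). wdeg u)" using t by simp
qed

definition lc_mul :: "('a::comm_ring_1,'g) lc \<Rightarrow> ('a,'g) lc \<Rightarrow> ('a,'g) lc" where
  "lc_mul xs ys = concat (map (\<lambda>(c,u). map (\<lambda>(d,v). (c * d, wmul u v)) ys) xs)"

definition lc_neg :: "('a::comm_ring_1,'g) lc \<Rightarrow> ('a,'g) lc" where
  "lc_neg xs = map (\<lambda>(c,u). (- c, u)) xs"

definition lc_ldiv :: "('a::comm_ring_1,'g) lc \<Rightarrow> ('a,'g) lc \<Rightarrow> ('a,'g) lc" where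
  "lc_ldiv xs ys = concat (map (\<lambda>(c,u). concat (map (\<lambda>(d,v).
       map (\<lambda>(e,w). (c * d * e, w)) (ldivw u v)) ys)) xs)"

definition lc_assoc :: "('a::comm_ring_1,'g) lc \<Rightarrow> ('a,'g) lc \<Rightarrow> ('a,'g) lc \<Rightarrow> ('a,'g) lc" where
  "lc_assoc a b c = lc_mul (lc_mul a b) c @ lc_neg (lc_mul a (lc_mul b c))"

definition lnorm :: "'g list \<Rightarrow> 'g word" where
  "lnorm gs = foldl (\<lambda>acc g. wmul acc (Some (Leaf g))) None gs"

text \<open>The multilinear polynomial p(x_1..x_m; y_1..y_n; z) in the generators
  x_i = i-1 (i = 1..m), y_j = m+j-1 (j = 1..n), z = m+n.\<close>
definition p_poly :: "nat \<Rightarrow> nat \<Rightarrow> ('a::comm_ring_1, nat) lc" where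
  "p_poly m n = concat (map (\<lambda>(a1,a2). concat (map (\<lambda>(b1,b2).
      lc_ldiv [(1, wmul a1 b1)] (lc_assoc [(1, a2)] [(1, b2)] [(1, Some (Leaf (m + n)))]))
      (cop (lnorm [m..<m+n])))) (cop (lnorm [0..<m])))"

type_synonym ('a,'g) ser = "'g word \<Rightarrow> 'a"

definition smul :: "('a::comm_ring_1,'g) ser \<Rightarrow> ('a,'g) ser \<Rightarrow> ('a,'g) ser" where
  "smul f g w = (case w of None \<Rightarrow> f None * g None
     | Some t \<Rightarrow> f None * g w + f w * g None
         + (case t of Leaf _ \<Rightarrow> 0 | Node a b \<Rightarrow> f (Some a) * g (Some b)))"

definition sone :: "('a::comm_ring_1,'g) ser" where
  "sone w = (if w = None then 1 else 0)"

definition sgen :: "'g \<Rightarrow> ('a::comm_ring_1,'g) ser" where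
  "sgen g w = (if w = Some (Leaf g) then 1 else 0)"

definition slin :: "('a::comm_ring_1 \<times> ('a,'g) ser) list \<Rightarrow> ('a,'g) ser" where
  "slin l w = sum_list (map (\<lambda>(c,f). c * f w) l)"

definition scomm :: "('a::comm_ring_1,'g) ser \<Rightarrow> ('a,'g) ser \<Rightarrow> ('a,'g) ser" where
  "scomm f g = slin [(1, smul f g), (-1, smul g f)]"

fun lpow :: "('a::comm_ring_1,'g) ser \<Rightarrow> nat \<Rightarrow> ('a,'g) ser" where
  "lpow f 0 = sone"
| "lpow f (Suc n) = smul (lpow f n) f"

text \<open>exp_l(u) = sum u^n/n! for u with zero constant term; the coefficient of a word
  of degree d only receives contributions from n \<le> d.\<close>
definition exp_l :: "('a::field,'g) ser \<Rightarrow> ('a,'g) ser" where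
  "exp_l f w = (\<Sum>n\<le>wdeg w. lpow f n w / of_nat (fact n))"

definition log_l :: "('a::field,'g) ser \<Rightarrow> ('a,'g) ser" where
  "log_l g = (THE f. f None = 0 \<and> exp_l f = g)"

fun evtree :: "('g \<Rightarrow> ('a::comm_ring_1,'h) ser) \<Rightarrow> 'g mag \<Rightarrow> ('a,'h) ser" where
  "evtree \<phi> (Leaf g) = \<phi> g"
| "evtree \<phi> (Node a b) = smul (evtree \<phi> a) (evtree \<phi> b)"

definition evword :: "('g \<Rightarrow> ('a::comm_ring_1,'h) ser) \<Rightarrow> 'g word \<Rightarrow> ('a,'h) ser" where
  "evword \<phi> w = (case w of None \<Rightarrow> sone | Some t \<Rightarrow> evtree \<phi> t)"

definition lc_eval :: "('g \<Rightarrow> ('a::comm_ring_1,'h) ser) \<Rightarrow> ('a,'g) lc \<Rightarrow> ('a,'h) ser" where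
  "lc_eval \<phi> xs = slin (map (\<lambda>(c,w). (c, evword \<phi> w)) xs)"

definition pval :: "('a::comm_ring_1,'h) ser list \<Rightarrow> ('a,'h) ser list \<Rightarrow> ('a,'h) ser \<Rightarrow> ('a,'h) ser" where
  "pval xs ys z = lc_eval
     (\<lambda>g. if g < length xs then xs ! g
          else if g < length xs + length ys then ys ! (g - length xs) else z)
     (p_poly (length xs) (length ys))"

definition angle :: "('a::comm_ring_1,'h) ser list \<Rightarrow> ('a,'h) ser \<Rightarrow> ('a,'h) ser \<Rightarrow> ('a,'h) ser" where
  "angle xs b c = slin [(-1, pval xs [b] c), (1, pval xs [c] b)]"

text \<open>Phi xs ys with xs = [x_1..x_m], ys = [y_1..y_{n+1}] (the last entry is y_{n+1}).\<close>
definition Phi :: "('a::field,'h) ser list \<Rightarrow> ('a,'h) ser list \<Rightarrow> ('a,'h) ser" where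
  "Phi xs ys w = (\<Sum>\<sigma>\<in>{\<sigma>. \<sigma> permutes {..<length xs}}. \<Sum>\<tau>\<in>{\<tau>. \<tau> permutes {..<length ys}}.
       pval (map (\<lambda>i. xs ! \<sigma> i) [0..<length xs])
            (map (\<lambda>j. ys ! \<tau> j) [0..<length ys - 1])
            (ys ! \<tau> (length ys - 1)) w)
     / (of_nat (fact (length xs)) * of_nat (fact (length ys)))"

definition sX :: "('a::comm_ring_1, bool) ser" where "sX = sgen False"
definition sY :: "('a::comm_ring_1, bool) ser" where "sY = sgen True"

end

theory Submission
  imports Defs
begin


fun subs :: "'g mag \<Rightarrow> 'g mag set" where
  "subs (Leaf x) = {Leaf x}"
| "subs (Node a b) = insert (Node a b) (subs a \<union> subs b)"

definition psubs :: "'g mag \<Rightarrow> 'g mag set" where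
  "psubs t = (case t of Leaf _ \<Rightarrow> {} | Node a b \<Rightarrow> subs a \<union> subs b)"

lemma subs_self: "t \<in> subs t" by (cases t) auto

lemma subs_trans: "s \<in> subs t \<Longrightarrow> subs s \<subseteq> subs t"
  by (induction t) auto

lemma subs_size: "s \<in> subs t \<Longrightarrow> size s \<le> size t"
  by (induction t) auto

lemma psubs_size: "s \<in> psubs t \<Longrightarrow> size s < size t"
  by (cases t) (auto simp: psubs_def dest!: subs_size)

lemma subs_nleaves: "s \<in> subs t \<Longrightarrow> nleaves s \<le> nleaves t"
  by (induction t) auto

lemma lpow_1: "lpow f (Suc 0) = f"
  by (rule ext) (auto simp: smul_def sone_def split: option.splits mag.splits)

lemma lpow_None: "f None = 0 \<Longrightarrow> lpow f (Suc n) None = 0"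
  by (simp add: smul_def)

lemma lpow_SucSuc: "f None = 0 \<Longrightarrow> lpow f (Suc (Suc n)) (Some t) =
   (case t of Leaf _ \<Rightarrow> 0 | Node a b \<Rightarrow> lpow f (Suc n) (Some a) * f (Some b))"
proof -
  assume f0: "f None = 0"
  have "lpow f (Suc (Suc n)) (Some t) = smul (lpow f (Suc n)) f (Some t)" by (simp only: lpow.simps)
  also have "\<dots> = (case t of Leaf _ \<Rightarrow> 0 | Node a b \<Rightarrow> lpow f (Suc n) (Some a) * f (Some b))"
    using lpow_None[of f n, OF f0] f0 by (simp add: smul_def del: lpow.simps)
  finally show ?thesis .
qed

lemma lpow_local:
  assumes "f1 None = 0" "f2 None = 0"
  shows "(\<forall>s\<in>subs t. f1 (Some s) = f2 (Some s)) \<Longrightarrow> lpow f1 (Suc n) (Some t) = lpow f2 (Suc n) (Some t)"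
proof (induction n arbitrary: t)
  case 0 then show ?case by (simp add: lpow_1 subs_self del: lpow.simps)
next
  case (Suc n)
  show ?case
  proof (cases t)
    case (Leaf x) then show ?thesis using assms by (simp only: lpow_SucSuc) simp
  next
    case (Node a b)
    have "lpow f1 (Suc n) (Some a) = lpow f2 (Suc n) (Some a)"
      using Suc by (intro Suc.IH) (auto simp: Node)
    moreover have "f1 (Some b) = f2 (Some b)" using Suc.prems by (auto simp: Node subs_self)
    ultimately show ?thesis using assms by (simp only: lpow_SucSuc Node) simp
  qed
qed

definition Rr :: "('a::field,'g) ser \<Rightarrow> 'g mag \<Rightarrow> 'a" where
  "Rr f t = (\<Sum>n\<in>{2..nleaves t}. lpow f n (Some t) / of_nat (fact n))"

lemma Rr_local:
  assumes "f1 None = 0" "f2 None = 0" "\<forall>s\<in>psubs t. f1 (Some s) = f2 (Some s)"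
  shows "Rr f1 t = Rr f2 t"
  unfolding Rr_def
proof (rule sum.cong[OF refl])
  fix n assume "n \<in> {2..nleaves t}"
  then have n2: "n \<ge> 2" by simp
  define m where "m = n - 2"
  have n: "n = Suc (Suc m)" using n2 by (simp add: m_def)
  have "lpow f1 (Suc (Suc m)) (Some t) = lpow f2 (Suc (Suc m)) (Some t)"
  proof (cases t)
    case (Leaf x) then show ?thesis using assms by (simp only: lpow_SucSuc) simp
  next
    case (Node a b)
    have "lpow f1 (Suc m) (Some a) = lpow f2 (Suc m) (Some a)"
      using assms(3) by (intro lpow_local[of f1 f2, OF assms(1,2)]) (auto simp: Node psubs_def)
    moreover have "f1 (Some b) = f2 (Some b)" using assms(3) by (auto simp: Node subs_self psubs_def)
    ultimately show ?thesis using assms by (simp only: lpow_SucSuc Node) simp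
  qed
  then show "lpow f1 n (Some t) / of_nat (fact n) = lpow f2 n (Some t) / of_nat (fact n)" by (simp add: n)
qed

lemma exp_split:
  assumes "f None = 0"
  shows "exp_l f (Some t) = f (Some t) + Rr f t"
proof -
  let ?a = "\<lambda>n. lpow f n (Some t) / of_nat (fact n)"
  have N: "nleaves t \<ge> 1" using nleaves_pos[of t] by simp
  have "{..nleaves t} = {0,1} \<union> {2..nleaves t}" using N by auto
  then have "(\<Sum>n\<le>nleaves t. ?a n) = sum ?a {0,1} + sum ?a {2..nleaves t}"
    by (simp add: sum.union_disjoint)
  also have "sum ?a {0,1} = f (Some t)" by (simp del: lpow.simps add: lpow.simps(1) lpow_1 sone_def)
  finally show ?thesis by (simp add: exp_l_def wdeg_def Rr_def)
qed

lemma exp_None: "exp_l f None = 1"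
  by (simp add: exp_l_def wdeg_def sone_def)

lemma uniq_local:
  assumes "f1 None = 0" "f2 None = 0"
  shows "(\<forall>s\<in>subs t. exp_l f1 (Some s) = exp_l f2 (Some s)) \<Longrightarrow> (\<forall>s\<in>subs t. f1 (Some s) = f2 (Some s))"
proof (induction t)
  case (Leaf x)
  have "Rr f1 (Leaf x) = Rr f2 (Leaf x)" using assms by (intro Rr_local) (auto simp: psubs_def)
  then show ?case using Leaf.prems exp_split[of f1, OF assms(1)] exp_split[of f2, OF assms(2)] by auto
next
  case (Node a b)
  have A: "\<forall>s\<in>subs a. f1 (Some s) = f2 (Some s)" using Node by auto
  have B: "\<forall>s\<in>subs b. f1 (Some s) = f2 (Some s)" using Node by auto
  have "Rr f1 (Node a b) = Rr f2 (Node a b)" using assms A B by (intro Rr_local) (auto simp: psubs_def)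
  moreover have "exp_l f1 (Some (Node a b)) = exp_l f2 (Some (Node a b))" using Node.prems by simp
  ultimately have "f1 (Some (Node a b)) = f2 (Some (Node a b))"
    using exp_split[of f1, OF assms(1)] exp_split[of f2, OF assms(2)] by auto
  with A B show ?case by auto
qed

function lg :: "('a::field,'g) ser \<Rightarrow> 'g mag \<Rightarrow> 'a" where
  "lg g t = g (Some t) - Rr (\<lambda>w. case w of None \<Rightarrow> 0 | Some s \<Rightarrow> if s \<in> psubs t then lg g s else 0) t"
  by auto
termination
  by (relation "measure (\<lambda>(g,t). size t)") (auto dest: psubs_size)

definition lglog :: "('a::field,'g) ser \<Rightarrow> ('a,'g) ser" where
  "lglog g w = (case w of None \<Rightarrow> 0 | Some t \<Rightarrow> lg g t)"

lemma exp_lglog: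
  assumes "g None = 1"
  shows "exp_l (lglog g) = g"
proof
  fix w show "exp_l (lglog g) w = g w"
  proof (cases w)
    case None then show ?thesis using assms by (simp add: exp_None)
  next
    case (Some t)
    let ?h = "\<lambda>w. case w of None \<Rightarrow> 0 | Some s \<Rightarrow> if s \<in> psubs t then lg g s else 0"
    have "Rr (lglog g) t = Rr ?h t" by (intro Rr_local) (auto simp: lglog_def)
    moreover have "lglog g (Some t) = g (Some t) - Rr ?h t"
      by (simp add: lglog_def lg.simps[of g t])
    ultimately show ?thesis using exp_split[of "lglog g" t] by (simp add: Some lglog_def)
  qed
qed

lemma log_l_eq:
  assumes "g None = 1"
  shows "log_l g = lglog g"
  unfolding log_l_def
proof (rule the_equality)
  show "lglog g None = 0 \<and> exp_l (lglog g) = g" using exp_lglog[of g, OF assms] by (simp add: lglog_def)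
next
  fix f assume f: "f None = 0 \<and> exp_l f = g"
  have E: "exp_l (lglog g) = g" using exp_lglog[of g, OF assms] .
  have L0: "lglog g None = 0" by (simp add: lglog_def)
  show "f = lglog g"
  proof
    fix w show "f w = lglog g w"
    proof (cases w)
      case None then show ?thesis using f by (simp add: lglog_def)
    next
      case (Some t)
      have "\<forall>s\<in>subs t. exp_l f (Some s) = exp_l (lglog g) (Some s)" using f E by simp
      then have "\<forall>s\<in>subs t. f (Some s) = lglog g (Some s)"
        using uniq_local[of f "lglog g" t] f L0 by blast
      then show ?thesis using Some subs_self by blast
    qed
  qed
qed

lemma log_char:
  assumes "g None = 1" "C None = 0" "\<forall>s\<in>subs t. exp_l C (Some s) = g (Some s)"
  shows "log_l g (Some t) = C (Some t)"
proof -
  have E: "exp_l (lglog g) = g" using exp_lglog[of g, OF assms(1)] .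
  have L0: "lglog g None = 0" by (simp add: lglog_def)
  have "\<forall>s\<in>subs t. exp_l (lglog g) (Some s) = exp_l C (Some s)" using assms(3) E by simp
  then have "\<forall>s\<in>subs t. lglog g (Some s) = C (Some s)"
    using uniq_local[of "lglog g" C t] assms(2) L0 by blast
  then show ?thesis using log_l_eq[of g, OF assms(1)] subs_self by auto
qed

lemma log_None: assumes "g None = 1" shows "log_l g None = 0"
  using log_l_eq[of g, OF assms] by (simp add: lglog_def)




fun coef :: "('a::comm_ring_1,'g) lc \<Rightarrow> ('a,'g) ser" where
  "coef [] w = 0"
| "coef ((c,u)#L) w = (if u = w then c else 0) + coef L w"

lemma coef_Cons_gen: "coef (p#L) w = (if snd p = w then fst p else 0) + coef L w"
  by (cases p) simp

lemma coef_append: "coef (A @ B) w = coef A w + coef B w"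
  by (induction A) (auto simp: coef_Cons_gen)

definition sadd :: "('a::comm_ring_1,'g) ser \<Rightarrow> ('a,'g) ser \<Rightarrow> ('a,'g) ser" where
  "sadd f g = (\<lambda>w. f w + g w)"
definition sscl :: "'a::comm_ring_1 \<Rightarrow> ('a,'g) ser \<Rightarrow> ('a,'g) ser" where
  "sscl c f = (\<lambda>w. c * f w)"

lemma sadd_coef: "sadd (coef A) (coef B) = coef (A @ B)"
  by (auto simp: sadd_def coef_append)

lemma sscl_coef: "sscl c (coef A) = coef (map (\<lambda>(d,u). (c*d,u)) A)"
  unfolding sscl_def by (rule ext, induction A) (auto simp: algebra_simps coef_Cons_gen split: prod.splits)

lemma slin_Nil: "slin [] = coef []"
  by (auto simp: slin_def)

lemma slin_Cons: "slin ((c,f)#l) = sadd (sscl c f) (slin l)"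
  by (auto simp: slin_def sadd_def sscl_def)

lemma smul_single: "smul (coef [(c,u)]) (coef [(d,v)]) = coef [(c*d, wmul u v)]"
  by (rule ext) (auto simp: smul_def split: option.splits mag.splits; cases u; cases v; auto)

lemma smul_add1: "smul (\<lambda>w. f w + g w) h = (\<lambda>w. smul f h w + smul g h w)"
  by (rule ext) (auto simp: smul_def algebra_simps split: option.splits mag.splits)
lemma smul_add2: "smul h (\<lambda>w. f w + g w) = (\<lambda>w. smul h f w + smul h g w)"
  by (rule ext) (auto simp: smul_def algebra_simps split: option.splits mag.splits)
lemma smul_zero1: "smul (\<lambda>w. 0) h = (\<lambda>w. 0)"
  by (rule ext) (auto simp: smul_def split: option.splits mag.splits)
lemma smul_zero2: "smul h (\<lambda>w. 0) = (\<lambda>w. 0)"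
  by (rule ext) (auto simp: smul_def split: option.splits mag.splits)

lemma coef_Cons_fun: "coef ((c,u)#L) = (\<lambda>w. coef [(c,u)] w + coef L w)"
  by auto
lemma coef_Nil_fun: "coef [] = (\<lambda>w. 0)" by auto

lemma smul_coef1: "smul (coef [(c,u)]) (coef M) = coef (map (\<lambda>(d,v). (c*d, wmul u v)) M)"
proof (induction M)
  case Nil then show ?case by (simp add: coef_Nil_fun smul_zero2)
next
  case (Cons p M) then show ?case
    by (cases p) (simp add: coef_Cons_fun[of _ _ M] coef_Cons_fun[of _ _ "map _ M"] smul_add2 smul_single[symmetric] del: coef.simps)
qed

lemma smul_coef: "smul (coef L) (coef M) = coef (lc_mul L M)"
proof (induction L)
  case Nil then show ?case by (simp add: coef_Nil_fun smul_zero1 lc_mul_def)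
next
  case (Cons p L)
  obtain c u where p: "p = (c,u)" by (cases p)
  have "lc_mul (p#L) M = map (\<lambda>(d,v). (c*d, wmul u v)) M @ lc_mul L M"
    by (simp add: lc_mul_def p)
  then show ?case using Cons
    by (simp add: p coef_Cons_fun[of c u L] smul_add1 smul_coef1 coef_append[abs_def] del: coef.simps)
qed

lemma sone_coef: "sone = coef [(1, None)]"
  by (rule ext) (auto simp: sone_def)
lemma sgen_coef: "sgen g = coef [(1, Some (Leaf g))]"
  by (rule ext) (auto simp: sgen_def)

lemma cop_simps: "cop None = [(None,None)]" "cop (Some t) = copt t"
  by (auto simp: cop_def)

lemma ldivw_None: "ldivw None w = [(1,w)]" by simp
lemma ldivw_Some: "ldivw (Some t) w = concat (map (\<lambda>(u1,u2). map (\<lambda>(c,v). (- c, v)) (ldivw u1 (wmul u2 w)))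
               (filter (\<lambda>(u1,u2). u2 \<noteq> None) (copt t)))"
  by (simp add: cop_simps)

declare ldivw.simps[simp del]

lemma evword_simps: "evword \<phi> None = sone" "evword \<phi> (Some t) = evtree \<phi> t"
  by (auto simp: evword_def)

lemma lc_eval_simp: "lc_eval \<phi> xs = slin (map (\<lambda>(c,w). (c, evword \<phi> w)) xs)"
  by (simp add: lc_eval_def)

lemmas comp_simps = sX_def sY_def sgen_coef sone_coef smul_coef slin_Nil slin_Cons sadd_coef sscl_coef
  scomm_def angle_def pval_def lc_eval_simp evword_simps p_poly_def lnorm_def cop_simps
  ldivw_None ldivw_Some lc_ldiv_def lc_assoc_def lc_mul_def lc_neg_def

lemma Phi_const:
  fixes xs ys :: "('a::field_char_0,'h) ser list"
  assumes xa: "\<forall>x\<in>set xs. x = a" and yb: "\<forall>y\<in>set ys. y = b" and ne: "ys \<noteq> []"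
  shows "Phi xs ys = pval xs (butlast ys) b"
proof
  fix w
  let ?m = "length xs" and ?n = "length ys"
  let ?v = "pval xs (butlast ys) b w"
  have "\<forall>\<sigma>\<in>{\<sigma>. \<sigma> permutes {..<?m}}. \<forall>\<tau>\<in>{\<tau>. \<tau> permutes {..<?n}}.
     pval (map (\<lambda>i. xs ! \<sigma> i) [0..<?m]) (map (\<lambda>j. ys ! \<tau> j) [0..<?n - 1]) (ys ! \<tau> (?n - 1)) w = ?v"
  proof (intro ballI)
    fix \<sigma> \<tau> assume s: "\<sigma> \<in> {\<sigma>. \<sigma> permutes {..<?m}}" and t: "\<tau> \<in> {\<tau>. \<tau> permutes {..<?n}}"
    have "map (\<lambda>i. xs ! \<sigma> i) [0..<?m] = xs"
    proof (rule nth_equalityI)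
      fix i assume "i < length (map (\<lambda>i. xs ! \<sigma> i) [0..<?m])"
      then have i: "i < ?m" by simp
      then have "\<sigma> i < ?m" using s permutes_in_image[of \<sigma> "{..<?m}" i] by auto
      moreover have "xs ! \<sigma> i = a" using xa nth_mem \<open>\<sigma> i < ?m\<close> by blast
      moreover have "xs ! i = a" using xa nth_mem i by blast
      ultimately show "map (\<lambda>i. xs ! \<sigma> i) [0..<?m] ! i = xs ! i" using i by simp
    qed simp
    moreover have "map (\<lambda>j. ys ! \<tau> j) [0..<?n - 1] = butlast ys"
    proof (rule nth_equalityI)
      fix i assume "i < length (map (\<lambda>j. ys ! \<tau> j) [0..<?n - 1])"
      then have i: "i < ?n - 1" by simp
      then have "\<tau> i < ?n" using t permutes_in_image[of \<tau> "{..<?n}" i] by auto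
      then show "map (\<lambda>j. ys ! \<tau> j) [0..<?n - 1] ! i = butlast ys ! i" using i yb
      proof -
        have i': "i < ?n" using i by simp
        have "ys ! \<tau> i = b" using yb nth_mem \<open>\<tau> i < ?n\<close> by blast
        moreover have "ys ! i = b" using yb nth_mem i' by blast
        ultimately show ?thesis using i by (simp add: nth_butlast)
      qed
    qed simp
    moreover have "ys ! \<tau> (?n - 1) = b"
    proof -
      have "?n - 1 < ?n" using ne by simp
      then have "\<tau> (?n - 1) < ?n" using t permutes_in_image[of \<tau> "{..<?n}"] by auto
      then show ?thesis using yb by auto
    qed
    ultimately show "pval (map (\<lambda>i. xs ! \<sigma> i) [0..<?m]) (map (\<lambda>j. ys ! \<tau> j) [0..<?n - 1]) (ys ! \<tau> (?n - 1)) w = ?v"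
      by simp
  qed
  then have "Phi xs ys w = (\<Sum>\<sigma>\<in>{\<sigma>. \<sigma> permutes {..<?m}}. \<Sum>\<tau>\<in>{\<tau>. \<tau> permutes {..<?n}}. ?v)
     / (of_nat (fact ?m) * of_nat (fact ?n))"
    unfolding Phi_def by (intro arg_cong2[where f="(/)"] sum.cong refl) auto
  also have "\<dots> = (of_nat (fact ?m) * of_nat (fact ?n) * ?v) / (of_nat (fact ?m) * of_nat (fact ?n))"
    by (simp add: card_permutations[of "{..<?m}" ?m] card_permutations[of "{..<?n}" ?n])
  also have "\<dots> = ?v" by simp
  finally show "Phi xs ys w = ?v" .
qed

fun ins :: "('a::comm_ring_1 \<times> 'g word) \<Rightarrow> ('a,'g) lc \<Rightarrow> ('a,'g) lc" where
  "ins p [] = [p]"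
| "ins (c,u) ((d,v)#L) = (if u = v then (c+d, v)#L else (d,v) # ins (c,u) L)"

lemma coef_ins: "coef (ins p L) w = coef (p#L) w"
  by (induction p L rule: ins.induct) (auto simp: algebra_simps)

fun collect :: "('a::comm_ring_1,'g) lc \<Rightarrow> ('a,'g) lc" where
  "collect [] = []"
| "collect (p#L) = ins p (collect L)"

lemma coef_collect: "coef (collect L) = coef L"
proof
  fix w show "coef (collect L) w = coef L w"
    by (induction L) (auto simp: coef_ins coef_Cons_gen)
qed

lemma Phi_const2:
  fixes xs ys :: "('a::field_char_0,'h) ser list"
  assumes "\<forall>x\<in>set xs. x = a" and "\<forall>y\<in>set ys. y = b"
  shows "Phi (a#xs) (b#ys) = pval (a#xs) (butlast (b#ys)) b"
  by (rule Phi_const) (use assms in auto)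

lemmas comp_simps2 = comp_simps Phi_const2

definition RHS :: "('a::field_char_0, bool) ser" where
 "RHS = slin [(1, sX), (1, sY), (1/2, scomm sX sY),
      (1/12, scomm sX (scomm sX sY)), (-1/3, angle [sX] sX sY),
      (-1/12, scomm sY (scomm sX sY)), (-1/6, angle [sY] sX sY), (-1/2, Phi [sX] [sY, sY]),
      (-1/24, angle [sX] sX (scomm sX sY)), (-1/12, scomm sX (angle [sX] sX sY)),
      (-1/8, angle [sX, sX] sX sY),
      (1/24, scomm (scomm sX (scomm sX sY)) sY), (-1/24, scomm sX (angle [sY] sX sY)),
      (-1/4, Phi [sX, sX] [sY, sY]), (-1/4, scomm sX (Phi [sX] [sY, sY])),
      (-1/24, scomm (angle [sX] sX sY) sY), (-1/24, angle [sX] (scomm sX sY) sY),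
      (-1/6, angle [sX, sY] sX sY), (1/24, angle [sY, sX] sX sY),
      (1/12, scomm (Phi [sX] [sY, sY]) sY), (1/24, angle [sY] sY (scomm sX sY)),
      (-1/24, angle [sY, sY] sX sY), (-1/6, Phi [sX] [sY, sY, sY])]"


fun kt :: "nat \<Rightarrow> bool mag \<Rightarrow> nat" where
  "kt acc (Leaf b) = 3 * acc + (if b then 2 else 1)"
| "kt acc (Node a b) = kt (kt (3 * acc) a) b"

definition key :: "bool word \<Rightarrow> nat" where
  "key w = (case w of None \<Rightarrow> 0 | Some t \<Rightarrow> kt 1 t)"

fun insk :: "('a::comm_ring_1 \<times> nat \<times> bool word) \<Rightarrow> ('a \<times> nat \<times> bool word) list \<Rightarrow> ('a \<times> nat \<times> bool word) list" where
  "insk p [] = [p]"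
| "insk (c,k,u) ((d,l,v)#L) = (if k < l then (c,k,u)#(d,l,v)#L else if k = l then
      (if u = v then (c+d,l,v)#L else (d,l,v) # insk (c,k,u) L) else (d,l,v) # insk (c,k,u) L)"

fun collk :: "('a::comm_ring_1 \<times> nat \<times> bool word) list \<Rightarrow> ('a \<times> nat \<times> bool word) list" where
  "collk [] = []"
| "collk (p#L) = insk p (collk L)"

definition strip :: "('a::comm_ring_1 \<times> nat \<times> bool word) list \<Rightarrow> ('a, bool) lc" where
  "strip L = map (\<lambda>(c,k,u). (c,u)) L"

definition canon :: "('a::comm_ring_1, bool) lc \<Rightarrow> ('a, bool) lc" where
  "canon L = strip (filter (\<lambda>(c,k,u). c \<noteq> 0) (collk (map (\<lambda>(c,u). (c, key u, u)) L)))"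

lemma coef_insk: "coef (strip (insk p L)) w = coef (strip (p#L)) w"
  by (induction p L rule: insk.induct) (auto simp: strip_def algebra_simps)

lemma coef_collk: "coef (strip (collk L)) w = coef (strip L) w"
  by (induction L) (auto simp: coef_insk, auto simp: strip_def)

lemma coef_filter: "coef (strip (filter (\<lambda>(c,k,u). c \<noteq> 0) L)) w = coef (strip L) w"
  by (induction L) (auto simp: strip_def)

lemma coef_canon: "coef (canon L) = coef L"
proof
  fix w
  have "coef (strip (map (\<lambda>(c,u). (c, key u, u)) L)) w = coef L w"
    by (induction L) (auto simp: strip_def)
  then show "coef (canon L) w = coef L w"
    by (simp add: canon_def coef_filter coef_collk del: coef.simps)
qed





definition N_C :: "('a::field_char_0, bool) lc" where
  "N_C = [((1), Some (Node (Leaf False) (Leaf True))), ((-1), Some (Node (Leaf True) (Leaf False)))]"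

lemma L_C: "(scomm sX sY :: ('a::field_char_0, bool) ser) = coef N_C"
  by (simp add: comp_simps2 N_C_def  del: coef.simps,
    (subst (1 2) coef_canon[symmetric], simp add: canon_def key_def strip_def del: coef.simps)?)

definition N_aX :: "('a::field_char_0, bool) lc" where
  "N_aX = [((-1), Some (Node (Node (Leaf False) (Leaf False)) (Leaf True))), ((1), Some (Node (Node (Leaf False) (Leaf True)) (Leaf False))), ((1), Some (Node (Leaf False) (Node (Leaf False) (Leaf True)))), ((-1), Some (Node (Leaf False) (Node (Leaf True) (Leaf False))))]"

lemma L_aX: "(angle [sX] sX sY :: ('a::field_char_0, bool) ser) = coef N_aX"
  by (simp add: comp_simps2 N_aX_def  del: coef.simps,
    (subst (1 2) coef_canon[symmetric], simp add: canon_def key_def strip_def del: coef.simps)?)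

definition N_aY :: "('a::field_char_0, bool) lc" where
  "N_aY = [((-1), Some (Node (Node (Leaf True) (Leaf False)) (Leaf True))), ((1), Some (Node (Node (Leaf True) (Leaf True)) (Leaf False))), ((1), Some (Node (Leaf True) (Node (Leaf False) (Leaf True)))), ((-1), Some (Node (Leaf True) (Node (Leaf True) (Leaf False))))]"

lemma L_aY: "(angle [sY] sX sY :: ('a::field_char_0, bool) ser) = coef N_aY"
  by (simp add: comp_simps2 N_aY_def  del: coef.simps,
    (subst (1 2) coef_canon[symmetric], simp add: canon_def key_def strip_def del: coef.simps)?)

definition N_P :: "('a::field_char_0, bool) lc" where
  "N_P = [((1), Some (Node (Node (Leaf False) (Leaf True)) (Leaf True))), ((-1), Some (Node (Leaf False) (Node (Leaf True) (Leaf True))))]"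

lemma L_P: "(Phi [sX] [sY, sY] :: ('a::field_char_0, bool) ser) = coef N_P"
  by (simp add: comp_simps2 N_P_def  del: coef.simps,
    (subst (1 2) coef_canon[symmetric], simp add: canon_def key_def strip_def del: coef.simps)?)

definition N_xC :: "('a::field_char_0, bool) lc" where
  "N_xC = [((-1), Some (Node (Node (Leaf False) (Leaf True)) (Leaf False))), ((1), Some (Node (Node (Leaf True) (Leaf False)) (Leaf False))), ((1), Some (Node (Leaf False) (Node (Leaf False) (Leaf True)))), ((-1), Some (Node (Leaf False) (Node (Leaf True) (Leaf False))))]"

lemma L_xC: "(scomm sX (coef N_C) :: ('a::field_char_0, bool) ser) = coef N_xC"
  by (simp add: comp_simps2 N_xC_def N_C_def del: coef.simps,
    (subst (1 2) coef_canon[symmetric], simp add: canon_def key_def strip_def del: coef.simps)?)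

definition N_yC :: "('a::field_char_0, bool) lc" where
  "N_yC = [((-1), Some (Node (Node (Leaf False) (Leaf True)) (Leaf True))), ((1), Some (Node (Node (Leaf True) (Leaf False)) (Leaf True))), ((1), Some (Node (Leaf True) (Node (Leaf False) (Leaf True)))), ((-1), Some (Node (Leaf True) (Node (Leaf True) (Leaf False))))]"

lemma L_yC: "(scomm sY (coef N_C) :: ('a::field_char_0, bool) ser) = coef N_yC"
  by (simp add: comp_simps2 N_yC_def N_C_def del: coef.simps,
    (subst (1 2) coef_canon[symmetric], simp add: canon_def key_def strip_def del: coef.simps)?)

definition N_aXC :: "('a::field_char_0, bool) lc" where
  "N_aXC = [((1), Some (Node (Node (Leaf False) (Node (Leaf False) (Leaf True))) (Leaf False))), ((-1), Some (Node (Node (Leaf False) (Node (Leaf True) (Leaf False))) (Leaf False))), ((-1), Some (Node (Node (Leaf False) (Leaf False)) (Node (Leaf False) (Leaf True)))), ((1), Some (Node (Node (Leaf False) (Leaf False)) (Node (Leaf True) (Leaf False)))), ((-1), Some (Node (Leaf False) (Node (Node (Leaf False) (Leaf True)) (Leaf False)))), ((1), Some (Node (Leaf False) (Node (Node (Leaf True) (Leaf False)) (Leaf False)))), ((1), Some (Node (Leaf False) (Node (Leaf False) (Node (Leaf False) (Leaf True))))), ((-1), Some (Node (Leaf False) (Node (Leaf False) (Node (Leaf True) (Leaf False)))))]"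

lemma L_aXC: "(angle [sX] sX (coef N_C) :: ('a::field_char_0, bool) ser) = coef N_aXC"
  by (simp add: comp_simps2 N_aXC_def N_C_def del: coef.simps,
    (subst (1 2) coef_canon[symmetric], simp add: canon_def key_def strip_def del: coef.simps)?)

definition N_xaX :: "('a::field_char_0, bool) lc" where
  "N_xaX = [((1), Some (Node (Node (Node (Leaf False) (Leaf False)) (Leaf True)) (Leaf False))), ((-1), Some (Node (Node (Node (Leaf False) (Leaf True)) (Leaf False)) (Leaf False))), ((-1), Some (Node (Node (Leaf False) (Node (Leaf False) (Leaf True))) (Leaf False))), ((1), Some (Node (Node (Leaf False) (Node (Leaf True) (Leaf False))) (Leaf False))), ((-1), Some (Node (Leaf False) (Node (Node (Leaf False) (Leaf False)) (Leaf True)))), ((1), Some (Node (Leaf False) (Node (Node (Leaf False) (Leaf True)) (Leaf False)))), ((1), Some (Node (Leaf False) (Node (Leaf False) (Node (Leaf False) (Leaf True))))), ((-1), Some (Node (Leaf False) (Node (Leaf False) (Node (Leaf True) (Leaf False)))))]"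

lemma L_xaX: "(scomm sX (coef N_aX) :: ('a::field_char_0, bool) ser) = coef N_xaX"
  by (simp add: comp_simps2 N_xaX_def N_aX_def del: coef.simps,
    (subst (1 2) coef_canon[symmetric], simp add: canon_def key_def strip_def del: coef.simps)?)

definition N_aXX :: "('a::field_char_0, bool) lc" where
  "N_aXX = [((-1), Some (Node (Node (Node (Leaf False) (Leaf False)) (Leaf False)) (Leaf True))), ((1), Some (Node (Node (Node (Leaf False) (Leaf False)) (Leaf True)) (Leaf False))), ((1), Some (Node (Node (Leaf False) (Leaf False)) (Node (Leaf False) (Leaf True)))), ((-1), Some (Node (Node (Leaf False) (Leaf False)) (Node (Leaf True) (Leaf False)))), ((2), Some (Node (Leaf False) (Node (Node (Leaf False) (Leaf False)) (Leaf True)))), ((-2), Some (Node (Leaf False) (Node (Node (Leaf False) (Leaf True)) (Leaf False)))), ((-2), Some (Node (Leaf False) (Node (Leaf False) (Node (Leaf False) (Leaf True))))), ((2), Some (Node (Leaf False) (Node (Leaf False) (Node (Leaf True) (Leaf False)))))]"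

lemma L_aXX: "(angle [sX, sX] sX sY :: ('a::field_char_0, bool) ser) = coef N_aXX"
  by (simp add: comp_simps2 N_aXX_def  del: coef.simps,
    (subst (1 2) coef_canon[symmetric], simp add: canon_def key_def strip_def del: coef.simps)?)

definition N_xCy :: "('a::field_char_0, bool) lc" where
  "N_xCy = [((-1), Some (Node (Node (Node (Leaf False) (Leaf True)) (Leaf False)) (Leaf True))), ((1), Some (Node (Node (Node (Leaf True) (Leaf False)) (Leaf False)) (Leaf True))), ((1), Some (Node (Node (Leaf False) (Node (Leaf False) (Leaf True))) (Leaf True))), ((-1), Some (Node (Node (Leaf False) (Node (Leaf True) (Leaf False))) (Leaf True))), ((1), Some (Node (Leaf True) (Node (Node (Leaf False) (Leaf True)) (Leaf False)))), ((-1), Some (Node (Leaf True) (Node (Node (Leaf True) (Leaf False)) (Leaf False)))), ((-1), Some (Node (Leaf True) (Node (Leaf False) (Node (Leaf False) (Leaf True))))), ((1), Some (Node (Leaf True) (Node (Leaf False) (Node (Leaf True) (Leaf False)))))]"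

lemma L_xCy: "(scomm (coef N_xC) sY :: ('a::field_char_0, bool) ser) = coef N_xCy"
  by (simp add: comp_simps2 N_xCy_def N_xC_def del: coef.simps,
    (subst (1 2) coef_canon[symmetric], simp add: canon_def key_def strip_def del: coef.simps)?)

definition N_xaY :: "('a::field_char_0, bool) lc" where
  "N_xaY = [((1), Some (Node (Node (Node (Leaf True) (Leaf False)) (Leaf True)) (Leaf False))), ((-1), Some (Node (Node (Node (Leaf True) (Leaf True)) (Leaf False)) (Leaf False))), ((-1), Some (Node (Node (Leaf True) (Node (Leaf False) (Leaf True))) (Leaf False))), ((1), Some (Node (Node (Leaf True) (Node (Leaf True) (Leaf False))) (Leaf False))), ((-1), Some (Node (Leaf False) (Node (Node (Leaf True) (Leaf False)) (Leaf True)))), ((1), Some (Node (Leaf False) (Node (Node (Leaf True) (Leaf True)) (Leaf False)))), ((1), Some (Node (Leaf False) (Node (Leaf True) (Node (Leaf False) (Leaf True))))), ((-1), Some (Node (Leaf False) (Node (Leaf True) (Node (Leaf True) (Leaf False)))))]"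

lemma L_xaY: "(scomm sX (coef N_aY) :: ('a::field_char_0, bool) ser) = coef N_xaY"
  by (simp add: comp_simps2 N_xaY_def N_aY_def del: coef.simps,
    (subst (1 2) coef_canon[symmetric], simp add: canon_def key_def strip_def del: coef.simps)?)

definition N_PXX :: "('a::field_char_0, bool) lc" where
  "N_PXX = [((1), Some (Node (Node (Node (Leaf False) (Leaf False)) (Leaf True)) (Leaf True))), ((-1), Some (Node (Node (Leaf False) (Leaf False)) (Node (Leaf True) (Leaf True)))), ((-2), Some (Node (Leaf False) (Node (Node (Leaf False) (Leaf True)) (Leaf True)))), ((2), Some (Node (Leaf False) (Node (Leaf False) (Node (Leaf True) (Leaf True)))))]"

lemma L_PXX: "(Phi [sX, sX] [sY, sY] :: ('a::field_char_0, bool) ser) = coef N_PXX"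
  by (simp add: comp_simps2 N_PXX_def  del: coef.simps,
    (subst (1 2) coef_canon[symmetric], simp add: canon_def key_def strip_def del: coef.simps)?)

definition N_xP :: "('a::field_char_0, bool) lc" where
  "N_xP = [((-1), Some (Node (Node (Node (Leaf False) (Leaf True)) (Leaf True)) (Leaf False))), ((1), Some (Node (Node (Leaf False) (Node (Leaf True) (Leaf True))) (Leaf False))), ((1), Some (Node (Leaf False) (Node (Node (Leaf False) (Leaf True)) (Leaf True)))), ((-1), Some (Node (Leaf False) (Node (Leaf False) (Node (Leaf True) (Leaf True)))))]"

lemma L_xP: "(scomm sX (coef N_P) :: ('a::field_char_0, bool) ser) = coef N_xP"
  by (simp add: comp_simps2 N_xP_def N_P_def del: coef.simps,
    (subst (1 2) coef_canon[symmetric], simp add: canon_def key_def strip_def del: coef.simps)?)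

definition N_aXy :: "('a::field_char_0, bool) lc" where
  "N_aXy = [((-1), Some (Node (Node (Node (Leaf False) (Leaf False)) (Leaf True)) (Leaf True))), ((1), Some (Node (Node (Node (Leaf False) (Leaf True)) (Leaf False)) (Leaf True))), ((1), Some (Node (Node (Leaf False) (Node (Leaf False) (Leaf True))) (Leaf True))), ((-1), Some (Node (Node (Leaf False) (Node (Leaf True) (Leaf False))) (Leaf True))), ((1), Some (Node (Leaf True) (Node (Node (Leaf False) (Leaf False)) (Leaf True)))), ((-1), Some (Node (Leaf True) (Node (Node (Leaf False) (Leaf True)) (Leaf False)))), ((-1), Some (Node (Leaf True) (Node (Leaf False) (Node (Leaf False) (Leaf True))))), ((1), Some (Node (Leaf True) (Node (Leaf False) (Node (Leaf True) (Leaf False)))))]"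

lemma L_aXy: "(scomm (coef N_aX) sY :: ('a::field_char_0, bool) ser) = coef N_aXy"
  by (simp add: comp_simps2 N_aXy_def N_aX_def del: coef.simps,
    (subst (1 2) coef_canon[symmetric], simp add: canon_def key_def strip_def del: coef.simps)?)

definition N_aXCy :: "('a::field_char_0, bool) lc" where
  "N_aXCy = [((-1), Some (Node (Node (Leaf False) (Node (Leaf False) (Leaf True))) (Leaf True))), ((1), Some (Node (Node (Leaf False) (Node (Leaf True) (Leaf False))) (Leaf True))), ((1), Some (Node (Node (Leaf False) (Leaf True)) (Node (Leaf False) (Leaf True)))), ((-1), Some (Node (Node (Leaf False) (Leaf True)) (Node (Leaf True) (Leaf False)))), ((1), Some (Node (Leaf False) (Node (Node (Leaf False) (Leaf True)) (Leaf True)))), ((-1), Some (Node (Leaf False) (Node (Node (Leaf True) (Leaf False)) (Leaf True)))), ((-1), Some (Node (Leaf False) (Node (Leaf True) (Node (Leaf False) (Leaf True))))), ((1), Some (Node (Leaf False) (Node (Leaf True) (Node (Leaf True) (Leaf False)))))]"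

lemma L_aXCy: "(angle [sX] (coef N_C) sY :: ('a::field_char_0, bool) ser) = coef N_aXCy"
  by (simp add: comp_simps2 N_aXCy_def N_C_def del: coef.simps,
    (subst (1 2) coef_canon[symmetric], simp add: canon_def key_def strip_def del: coef.simps)?)

definition N_aXY :: "('a::field_char_0, bool) lc" where
  "N_aXY = [((-1), Some (Node (Node (Node (Leaf False) (Leaf True)) (Leaf False)) (Leaf True))), ((1), Some (Node (Node (Node (Leaf False) (Leaf True)) (Leaf True)) (Leaf False))), ((1), Some (Node (Node (Leaf False) (Leaf True)) (Node (Leaf False) (Leaf True)))), ((-1), Some (Node (Node (Leaf False) (Leaf True)) (Node (Leaf True) (Leaf False)))), ((1), Some (Node (Leaf False) (Node (Node (Leaf True) (Leaf False)) (Leaf True)))), ((-1), Some (Node (Leaf False) (Node (Node (Leaf True) (Leaf True)) (Leaf False)))), ((-1), Some (Node (Leaf False) (Node (Leaf True) (Node (Leaf False) (Leaf True))))), ((1), Some (Node (Leaf False) (Node (Leaf True) (Node (Leaf True) (Leaf False))))), ((1), Some (Node (Leaf True) (Node (Node (Leaf False) (Leaf False)) (Leaf True)))), ((-1), Some (Node (Leaf True) (Node (Node (Leaf False) (Leaf True)) (Leaf False)))), ((-1), Some (Node (Leaf True) (Node (Leaf False) (Node (Leaf False) (Leaf True))))), ((1), Some (Node (Leaf True) (Node (Leaf False) (Node (Leaf True) (Leaf False)))))]"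

lemma L_aXY: "(angle [sX, sY] sX sY :: ('a::field_char_0, bool) ser) = coef N_aXY"
  by (simp add: comp_simps2 N_aXY_def  del: coef.simps,
    (subst (1 2) coef_canon[symmetric], simp add: canon_def key_def strip_def del: coef.simps)?)

definition N_aYX :: "('a::field_char_0, bool) lc" where
  "N_aYX = [((-1), Some (Node (Node (Node (Leaf True) (Leaf False)) (Leaf False)) (Leaf True))), ((1), Some (Node (Node (Node (Leaf True) (Leaf False)) (Leaf True)) (Leaf False))), ((1), Some (Node (Node (Leaf True) (Leaf False)) (Node (Leaf False) (Leaf True)))), ((-1), Some (Node (Node (Leaf True) (Leaf False)) (Node (Leaf True) (Leaf False)))), ((1), Some (Node (Leaf False) (Node (Node (Leaf True) (Leaf False)) (Leaf True)))), ((-1), Some (Node (Leaf False) (Node (Node (Leaf True) (Leaf True)) (Leaf False)))), ((-1), Some (Node (Leaf False) (Node (Leaf True) (Node (Leaf False) (Leaf True))))), ((1), Some (Node (Leaf False) (Node (Leaf True) (Node (Leaf True) (Leaf False))))), ((1), Some (Node (Leaf True) (Node (Node (Leaf False) (Leaf False)) (Leaf True)))), ((-1), Some (Node (Leaf True) (Node (Node (Leaf False) (Leaf True)) (Leaf False)))), ((-1), Some (Node (Leaf True) (Node (Leaf False) (Node (Leaf False) (Leaf True))))), ((1), Some (Node (Leaf True) (Node (Leaf False) (Node (Leaf True) (Leaf False)))))]"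

lemma L_aYX: "(angle [sY, sX] sX sY :: ('a::field_char_0, bool) ser) = coef N_aYX"
  by (simp add: comp_simps2 N_aYX_def  del: coef.simps,
    (subst (1 2) coef_canon[symmetric], simp add: canon_def key_def strip_def del: coef.simps)?)

definition N_Py :: "('a::field_char_0, bool) lc" where
  "N_Py = [((1), Some (Node (Node (Node (Leaf False) (Leaf True)) (Leaf True)) (Leaf True))), ((-1), Some (Node (Node (Leaf False) (Node (Leaf True) (Leaf True))) (Leaf True))), ((-1), Some (Node (Leaf True) (Node (Node (Leaf False) (Leaf True)) (Leaf True)))), ((1), Some (Node (Leaf True) (Node (Leaf False) (Node (Leaf True) (Leaf True)))))]"

lemma L_Py: "(scomm (coef N_P) sY :: ('a::field_char_0, bool) ser) = coef N_Py"
  by (simp add: comp_simps2 N_Py_def N_P_def del: coef.simps,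
    (subst (1 2) coef_canon[symmetric], simp add: canon_def key_def strip_def del: coef.simps)?)

definition N_aYC :: "('a::field_char_0, bool) lc" where
  "N_aYC = [((1), Some (Node (Node (Leaf True) (Node (Leaf False) (Leaf True))) (Leaf True))), ((-1), Some (Node (Node (Leaf True) (Node (Leaf True) (Leaf False))) (Leaf True))), ((-1), Some (Node (Node (Leaf True) (Leaf True)) (Node (Leaf False) (Leaf True)))), ((1), Some (Node (Node (Leaf True) (Leaf True)) (Node (Leaf True) (Leaf False)))), ((-1), Some (Node (Leaf True) (Node (Node (Leaf False) (Leaf True)) (Leaf True)))), ((1), Some (Node (Leaf True) (Node (Node (Leaf True) (Leaf False)) (Leaf True)))), ((1), Some (Node (Leaf True) (Node (Leaf True) (Node (Leaf False) (Leaf True))))), ((-1), Some (Node (Leaf True) (Node (Leaf True) (Node (Leaf True) (Leaf False)))))]"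

lemma L_aYC: "(angle [sY] sY (coef N_C) :: ('a::field_char_0, bool) ser) = coef N_aYC"
  by (simp add: comp_simps2 N_aYC_def N_C_def del: coef.simps,
    (subst (1 2) coef_canon[symmetric], simp add: canon_def key_def strip_def del: coef.simps)?)

definition N_aYY :: "('a::field_char_0, bool) lc" where
  "N_aYY = [((-1), Some (Node (Node (Node (Leaf True) (Leaf True)) (Leaf False)) (Leaf True))), ((1), Some (Node (Node (Node (Leaf True) (Leaf True)) (Leaf True)) (Leaf False))), ((1), Some (Node (Node (Leaf True) (Leaf True)) (Node (Leaf False) (Leaf True)))), ((-1), Some (Node (Node (Leaf True) (Leaf True)) (Node (Leaf True) (Leaf False)))), ((2), Some (Node (Leaf True) (Node (Node (Leaf True) (Leaf False)) (Leaf True)))), ((-2), Some (Node (Leaf True) (Node (Node (Leaf True) (Leaf True)) (Leaf False)))), ((-2), Some (Node (Leaf True) (Node (Leaf True) (Node (Leaf False) (Leaf True))))), ((2), Some (Node (Leaf True) (Node (Leaf True) (Node (Leaf True) (Leaf False)))))]"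

lemma L_aYY: "(angle [sY, sY] sX sY :: ('a::field_char_0, bool) ser) = coef N_aYY"
  by (simp add: comp_simps2 N_aYY_def  del: coef.simps,
    (subst (1 2) coef_canon[symmetric], simp add: canon_def key_def strip_def del: coef.simps)?)

definition N_PY3 :: "('a::field_char_0, bool) lc" where
  "N_PY3 = [((1), Some (Node (Node (Leaf False) (Node (Leaf True) (Leaf True))) (Leaf True))), ((-1), Some (Node (Leaf False) (Node (Node (Leaf True) (Leaf True)) (Leaf True)))), ((-2), Some (Node (Leaf True) (Node (Node (Leaf False) (Leaf True)) (Leaf True)))), ((2), Some (Node (Leaf True) (Node (Leaf False) (Node (Leaf True) (Leaf True)))))]"

lemma L_PY3: "(Phi [sX] [sY, sY, sY] :: ('a::field_char_0, bool) ser) = coef N_PY3"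
  by (simp add: comp_simps2 N_PY3_def  del: coef.simps,
    (subst (1 2) coef_canon[symmetric], simp add: canon_def key_def strip_def del: coef.simps)?)




definition NORM :: "('a::field_char_0, bool) lc" where
 "NORM = [((1), Some (Leaf False)),
  ((1), Some (Leaf True)),
  ((1/2), Some (Node (Leaf False) (Leaf True))),
  ((-1/2), Some (Node (Leaf True) (Leaf False))),
  ((1/3), Some (Node (Node (Leaf False) (Leaf False)) (Leaf True))),
  ((-5/12), Some (Node (Node (Leaf False) (Leaf True)) (Leaf False))),
  ((-5/12), Some (Node (Node (Leaf False) (Leaf True)) (Leaf True))),
  ((1/12), Some (Node (Node (Leaf True) (Leaf False)) (Leaf False))),
  ((1/12), Some (Node (Node (Leaf True) (Leaf False)) (Leaf True))),
  ((-1/6), Some (Node (Node (Leaf True) (Leaf True)) (Leaf False))),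
  ((-1/4), Some (Node (Leaf False) (Node (Leaf False) (Leaf True)))),
  ((1/4), Some (Node (Leaf False) (Node (Leaf True) (Leaf False)))),
  ((1/2), Some (Node (Leaf False) (Node (Leaf True) (Leaf True)))),
  ((-1/4), Some (Node (Leaf True) (Node (Leaf False) (Leaf True)))),
  ((1/4), Some (Node (Leaf True) (Node (Leaf True) (Leaf False)))),
  ((1/8), Some (Node (Node (Node (Leaf False) (Leaf False)) (Leaf False)) (Leaf True))),
  ((-5/24), Some (Node (Node (Node (Leaf False) (Leaf False)) (Leaf True)) (Leaf False))),
  ((-5/24), Some (Node (Node (Node (Leaf False) (Leaf False)) (Leaf True)) (Leaf True))),
  ((1/12), Some (Node (Node (Node (Leaf False) (Leaf True)) (Leaf False)) (Leaf False))),
  ((1/12), Some (Node (Node (Node (Leaf False) (Leaf True)) (Leaf False)) (Leaf True))),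
  ((1/12), Some (Node (Node (Node (Leaf False) (Leaf True)) (Leaf True)) (Leaf False))),
  ((1/12), Some (Node (Node (Node (Leaf False) (Leaf True)) (Leaf True)) (Leaf True))),
  ((1/24), Some (Node (Node (Node (Leaf True) (Leaf True)) (Leaf False)) (Leaf False))),
  ((1/24), Some (Node (Node (Node (Leaf True) (Leaf True)) (Leaf False)) (Leaf True))),
  ((-1/24), Some (Node (Node (Node (Leaf True) (Leaf True)) (Leaf True)) (Leaf False))),
  ((1/24), Some (Node (Node (Leaf False) (Node (Leaf False) (Leaf True))) (Leaf False))),
  ((1/24), Some (Node (Node (Leaf False) (Node (Leaf False) (Leaf True))) (Leaf True))),
  ((-1/24), Some (Node (Node (Leaf False) (Node (Leaf True) (Leaf False))) (Leaf False))),
  ((-1/24), Some (Node (Node (Leaf False) (Node (Leaf True) (Leaf False))) (Leaf True))),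
  ((-1/4), Some (Node (Node (Leaf False) (Node (Leaf True) (Leaf True))) (Leaf False))),
  ((-1/4), Some (Node (Node (Leaf False) (Node (Leaf True) (Leaf True))) (Leaf True))),
  ((-1/12), Some (Node (Node (Leaf False) (Leaf False)) (Node (Leaf False) (Leaf True)))),
  ((1/12), Some (Node (Node (Leaf False) (Leaf False)) (Node (Leaf True) (Leaf False)))),
  ((1/4), Some (Node (Node (Leaf False) (Leaf False)) (Node (Leaf True) (Leaf True)))),
  ((-5/24), Some (Node (Node (Leaf False) (Leaf True)) (Node (Leaf False) (Leaf True)))),
  ((5/24), Some (Node (Node (Leaf False) (Leaf True)) (Node (Leaf True) (Leaf False)))),
  ((1/24), Some (Node (Node (Leaf True) (Node (Leaf False) (Leaf True))) (Leaf False))),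
  ((1/24), Some (Node (Node (Leaf True) (Node (Leaf False) (Leaf True))) (Leaf True))),
  ((-1/24), Some (Node (Node (Leaf True) (Node (Leaf True) (Leaf False))) (Leaf False))),
  ((-1/24), Some (Node (Node (Leaf True) (Node (Leaf True) (Leaf False))) (Leaf True))),
  ((1/24), Some (Node (Node (Leaf True) (Leaf False)) (Node (Leaf False) (Leaf True)))),
  ((-1/24), Some (Node (Node (Leaf True) (Leaf False)) (Node (Leaf True) (Leaf False)))),
  ((-1/12), Some (Node (Node (Leaf True) (Leaf True)) (Node (Leaf False) (Leaf True)))),
  ((1/12), Some (Node (Node (Leaf True) (Leaf True)) (Node (Leaf True) (Leaf False)))),
  ((-1/6), Some (Node (Leaf False) (Node (Node (Leaf False) (Leaf False)) (Leaf True)))),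
  ((5/24), Some (Node (Leaf False) (Node (Node (Leaf False) (Leaf True)) (Leaf False)))),
  ((5/24), Some (Node (Leaf False) (Node (Node (Leaf False) (Leaf True)) (Leaf True)))),
  ((-1/24), Some (Node (Leaf False) (Node (Node (Leaf True) (Leaf False)) (Leaf False)))),
  ((-1/24), Some (Node (Leaf False) (Node (Node (Leaf True) (Leaf False)) (Leaf True)))),
  ((1/12), Some (Node (Leaf False) (Node (Node (Leaf True) (Leaf True)) (Leaf False)))),
  ((1/6), Some (Node (Leaf False) (Node (Node (Leaf True) (Leaf True)) (Leaf True)))),
  ((1/8), Some (Node (Leaf False) (Node (Leaf False) (Node (Leaf False) (Leaf True))))),
  ((-1/8), Some (Node (Leaf False) (Node (Leaf False) (Node (Leaf True) (Leaf False))))),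
  ((-1/4), Some (Node (Leaf False) (Node (Leaf False) (Node (Leaf True) (Leaf True))))),
  ((1/8), Some (Node (Leaf False) (Node (Leaf True) (Node (Leaf False) (Leaf True))))),
  ((-1/8), Some (Node (Leaf False) (Node (Leaf True) (Node (Leaf True) (Leaf False))))),
  ((-1/6), Some (Node (Leaf True) (Node (Node (Leaf False) (Leaf False)) (Leaf True)))),
  ((5/24), Some (Node (Leaf True) (Node (Node (Leaf False) (Leaf True)) (Leaf False)))),
  ((5/24), Some (Node (Leaf True) (Node (Node (Leaf False) (Leaf True)) (Leaf True)))),
  ((-1/24), Some (Node (Leaf True) (Node (Node (Leaf True) (Leaf False)) (Leaf False)))),
  ((-1/24), Some (Node (Leaf True) (Node (Node (Leaf True) (Leaf False)) (Leaf True)))),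
  ((1/12), Some (Node (Leaf True) (Node (Node (Leaf True) (Leaf True)) (Leaf False)))),
  ((1/8), Some (Node (Leaf True) (Node (Leaf False) (Node (Leaf False) (Leaf True))))),
  ((-1/8), Some (Node (Leaf True) (Node (Leaf False) (Node (Leaf True) (Leaf False))))),
  ((-1/4), Some (Node (Leaf True) (Node (Leaf False) (Node (Leaf True) (Leaf True))))),
  ((1/8), Some (Node (Leaf True) (Node (Leaf True) (Node (Leaf False) (Leaf True))))),
  ((-1/8), Some (Node (Leaf True) (Node (Leaf True) (Node (Leaf True) (Leaf False)))))]"

lemma RHS_NORM: "RHS = coef NORM"
  unfolding RHS_def
  apply (simp only: L_C L_aX L_aY L_P L_xC L_yC L_aXC L_xaX L_aXX L_xCy L_xaY L_PXX L_xP L_aXy L_aXCy L_aXY L_aYX L_Py L_aYC L_aYY L_PY3)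
  apply (simp add: NORM_def N_C_def N_aX_def N_aY_def N_P_def N_xC_def N_yC_def N_aXC_def N_xaX_def N_aXX_def N_xCy_def N_xaY_def N_PXX_def N_xP_def N_aXy_def N_aXCy_def N_aXY_def N_aYX_def N_Py_def N_aYC_def N_aYY_def N_PY3_def sX_def sY_def sgen_coef slin_Nil slin_Cons sadd_coef sscl_coef del: coef.simps)
  apply (subst (1 2) coef_canon[symmetric])
  apply (simp add: canon_def key_def strip_def del: coef.simps)
  done




lemma smul_None: "smul F G None = F None * G None" by (simp add: smul_def)
lemma smul_Leaf: "smul F G (Some (Leaf x)) = F None * G (Some (Leaf x)) + F (Some (Leaf x)) * G None"
  by (simp add: smul_def)
lemma smul_Node: "smul F G (Some (Node a b)) = F None * G (Some (Node a b)) + F (Some (Node a b)) * G None + F (Some a) * G (Some b)"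
  by (simp add: smul_def)

lemma lpow2: assumes f: "f None = 0"
  shows "lpow f 2 (Some t) = (case t of Leaf _ \<Rightarrow> 0 | Node a b \<Rightarrow> f (Some a) * f (Some b))"
proof -
  have "lpow f 2 (Some t) = lpow f (Suc (Suc 0)) (Some t)" by (simp only: numeral_2_eq_2)
  also have "\<dots> = (case t of Leaf _ \<Rightarrow> 0 | Node a b \<Rightarrow> lpow f (Suc 0) (Some a) * f (Some b))"
    by (rule lpow_SucSuc[of f, OF f])
  finally show ?thesis by (simp only: lpow_1)
qed
lemma lpow3: assumes f: "f None = 0"
  shows "lpow f 3 (Some t) = (case t of Leaf _ \<Rightarrow> 0 | Node a b \<Rightarrow> lpow f 2 (Some a) * f (Some b))"
proof -
  have "lpow f 3 (Some t) = lpow f (Suc (Suc (Suc 0))) (Some t)" by (simp only: numeral_3_eq_3)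
  also have "\<dots> = (case t of Leaf _ \<Rightarrow> 0 | Node a b \<Rightarrow> lpow f (Suc (Suc 0)) (Some a) * f (Some b))"
    by (rule lpow_SucSuc[of f, OF f])
  finally show ?thesis by (simp only: numeral_2_eq_2)
qed
lemma lpow4: assumes f: "f None = 0"
  shows "lpow f 4 (Some t) = (case t of Leaf _ \<Rightarrow> 0 | Node a b \<Rightarrow> lpow f 3 (Some a) * f (Some b))"
proof -
  have e: "(4::nat) = Suc (Suc (Suc (Suc 0)))" by simp
  have "lpow f 4 (Some t) = lpow f (Suc (Suc (Suc (Suc 0)))) (Some t)" by (simp only: e)
  also have "\<dots> = (case t of Leaf _ \<Rightarrow> 0 | Node a b \<Rightarrow> lpow f (Suc (Suc (Suc 0))) (Some a) * f (Some b))"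
    by (rule lpow_SucSuc[of f, OF f])
  finally show ?thesis by (simp only: numeral_3_eq_3)
qed

lemma exp_Some4:
  assumes "f None = 0" "nleaves t \<le> 4"
  shows "exp_l f (Some t) = f (Some t) + (if 2 \<le> nleaves t then lpow f 2 (Some t) / 2 else 0)
     + (if 3 \<le> nleaves t then lpow f 3 (Some t) / 6 else 0) + (if 4 \<le> nleaves t then lpow f 4 (Some t) / 24 else 0)"
proof -
  have n: "nleaves t = 1 \<or> nleaves t = 2 \<or> nleaves t = 3 \<or> nleaves t = 4"
    using assms(2) nleaves_pos[of t] by arith
  have e: "exp_l f (Some t) = f (Some t) + Rr f t" by (rule exp_split[of f, OF assms(1)])
  have 2: "{2..2::nat} = {2}" by auto
  have 3: "{2..3::nat} = {2,3}" by auto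
  have 4: "{2..4::nat} = {2,3,4}" by auto
  from n show ?thesis unfolding e Rr_def
    by (elim disjE) (simp_all add: 2 3 4 fact_numeral)
qed

lemma sX_vals: "sX None = 0" "sX (Some (Leaf x)) = (if x then 0 else 1)" "sX (Some (Node a b)) = 0"
  by (auto simp: sX_def sgen_def)
lemma sY_vals: "sY None = 0" "sY (Some (Leaf x)) = (if x then 1 else 0)" "sY (Some (Node a b)) = 0"
  by (auto simp: sY_def sgen_def)

lemmas evalrules = smul_None smul_Leaf smul_Node lpow2 lpow3 lpow4 exp_Some4 exp_None sX_vals sY_vals

lemma Dn1: "nleaves (Node a b) \<noteq> 1"
  using nleaves_pos[of a] nleaves_pos[of b] by simp
lemma Dsplit2: "nleaves a + nleaves b = 2 \<longleftrightarrow> nleaves a = 1 \<and> nleaves b = 1"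
  using nleaves_pos[of a] nleaves_pos[of b] by arith
lemma Dsplit3: "nleaves a + nleaves b = 3 \<longleftrightarrow> (nleaves a = 1 \<and> nleaves b = 2) \<or> (nleaves a = 2 \<and> nleaves b = 1)"
  using nleaves_pos[of a] nleaves_pos[of b] by arith
lemma Dsplit4: "nleaves a + nleaves b = 4 \<longleftrightarrow> (nleaves a = 1 \<and> nleaves b = 3) \<or> (nleaves a = 2 \<and> nleaves b = 2) \<or> (nleaves a = 3 \<and> nleaves b = 1)"
  using nleaves_pos[of a] nleaves_pos[of b] by arith

lemma tab0: "(coef NORM (None) :: 'a::field_char_0) = (0)" by (simp add: NORM_def)
lemma tab1: "(coef NORM (Some (Leaf False)) :: 'a::field_char_0) = (1)" by (simp add: NORM_def)
lemma tab2: "(coef NORM (Some (Leaf True)) :: 'a::field_char_0) = (1)" by (simp add: NORM_def)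
lemma tab3: "(coef NORM (Some (Node (Leaf False) (Leaf False))) :: 'a::field_char_0) = (0)" by (simp add: NORM_def)
lemma tab4: "(coef NORM (Some (Node (Leaf False) (Leaf True))) :: 'a::field_char_0) = (1/2)" by (simp add: NORM_def)
lemma tab5: "(coef NORM (Some (Node (Leaf True) (Leaf False))) :: 'a::field_char_0) = (-1/2)" by (simp add: NORM_def)
lemma tab6: "(coef NORM (Some (Node (Leaf True) (Leaf True))) :: 'a::field_char_0) = (0)" by (simp add: NORM_def)
lemma tab7: "(coef NORM (Some (Node (Leaf False) (Node (Leaf False) (Leaf False)))) :: 'a::field_char_0) = (0)" by (simp add: NORM_def)
lemma tab8: "(coef NORM (Some (Node (Leaf False) (Node (Leaf False) (Leaf True)))) :: 'a::field_char_0) = (-1/4)" by (simp add: NORM_def)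
lemma tab9: "(coef NORM (Some (Node (Leaf False) (Node (Leaf True) (Leaf False)))) :: 'a::field_char_0) = (1/4)" by (simp add: NORM_def)
lemma tab10: "(coef NORM (Some (Node (Leaf False) (Node (Leaf True) (Leaf True)))) :: 'a::field_char_0) = (1/2)" by (simp add: NORM_def)
lemma tab11: "(coef NORM (Some (Node (Leaf True) (Node (Leaf False) (Leaf False)))) :: 'a::field_char_0) = (0)" by (simp add: NORM_def)
lemma tab12: "(coef NORM (Some (Node (Leaf True) (Node (Leaf False) (Leaf True)))) :: 'a::field_char_0) = (-1/4)" by (simp add: NORM_def)
lemma tab13: "(coef NORM (Some (Node (Leaf True) (Node (Leaf True) (Leaf False)))) :: 'a::field_char_0) = (1/4)" by (simp add: NORM_def)
lemma tab14: "(coef NORM (Some (Node (Leaf True) (Node (Leaf True) (Leaf True)))) :: 'a::field_char_0) = (0)" by (simp add: NORM_def)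
lemma tab15: "(coef NORM (Some (Node (Node (Leaf False) (Leaf False)) (Leaf False))) :: 'a::field_char_0) = (0)" by (simp add: NORM_def)
lemma tab16: "(coef NORM (Some (Node (Node (Leaf False) (Leaf False)) (Leaf True))) :: 'a::field_char_0) = (1/3)" by (simp add: NORM_def)
lemma tab17: "(coef NORM (Some (Node (Node (Leaf False) (Leaf True)) (Leaf False))) :: 'a::field_char_0) = (-5/12)" by (simp add: NORM_def)
lemma tab18: "(coef NORM (Some (Node (Node (Leaf False) (Leaf True)) (Leaf True))) :: 'a::field_char_0) = (-5/12)" by (simp add: NORM_def)
lemma tab19: "(coef NORM (Some (Node (Node (Leaf True) (Leaf False)) (Leaf False))) :: 'a::field_char_0) = (1/12)" by (simp add: NORM_def)
lemma tab20: "(coef NORM (Some (Node (Node (Leaf True) (Leaf False)) (Leaf True))) :: 'a::field_char_0) = (1/12)" by (simp add: NORM_def)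
lemma tab21: "(coef NORM (Some (Node (Node (Leaf True) (Leaf True)) (Leaf False))) :: 'a::field_char_0) = (-1/6)" by (simp add: NORM_def)
lemma tab22: "(coef NORM (Some (Node (Node (Leaf True) (Leaf True)) (Leaf True))) :: 'a::field_char_0) = (0)" by (simp add: NORM_def)
lemma tab23: "(coef NORM (Some (Node (Leaf False) (Node (Leaf False) (Node (Leaf False) (Leaf False))))) :: 'a::field_char_0) = (0)" by (simp add: NORM_def)
lemma tab24: "(coef NORM (Some (Node (Leaf False) (Node (Leaf False) (Node (Leaf False) (Leaf True))))) :: 'a::field_char_0) = (1/8)" by (simp add: NORM_def)
lemma tab25: "(coef NORM (Some (Node (Leaf False) (Node (Leaf False) (Node (Leaf True) (Leaf False))))) :: 'a::field_char_0) = (-1/8)" by (simp add: NORM_def)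
lemma tab26: "(coef NORM (Some (Node (Leaf False) (Node (Leaf False) (Node (Leaf True) (Leaf True))))) :: 'a::field_char_0) = (-1/4)" by (simp add: NORM_def)
lemma tab27: "(coef NORM (Some (Node (Leaf False) (Node (Leaf True) (Node (Leaf False) (Leaf False))))) :: 'a::field_char_0) = (0)" by (simp add: NORM_def)
lemma tab28: "(coef NORM (Some (Node (Leaf False) (Node (Leaf True) (Node (Leaf False) (Leaf True))))) :: 'a::field_char_0) = (1/8)" by (simp add: NORM_def)
lemma tab29: "(coef NORM (Some (Node (Leaf False) (Node (Leaf True) (Node (Leaf True) (Leaf False))))) :: 'a::field_char_0) = (-1/8)" by (simp add: NORM_def)
lemma tab30: "(coef NORM (Some (Node (Leaf False) (Node (Leaf True) (Node (Leaf True) (Leaf True))))) :: 'a::field_char_0) = (0)" by (simp add: NORM_def)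
lemma tab31: "(coef NORM (Some (Node (Leaf False) (Node (Node (Leaf False) (Leaf False)) (Leaf False)))) :: 'a::field_char_0) = (0)" by (simp add: NORM_def)
lemma tab32: "(coef NORM (Some (Node (Leaf False) (Node (Node (Leaf False) (Leaf False)) (Leaf True)))) :: 'a::field_char_0) = (-1/6)" by (simp add: NORM_def)
lemma tab33: "(coef NORM (Some (Node (Leaf False) (Node (Node (Leaf False) (Leaf True)) (Leaf False)))) :: 'a::field_char_0) = (5/24)" by (simp add: NORM_def)
lemma tab34: "(coef NORM (Some (Node (Leaf False) (Node (Node (Leaf False) (Leaf True)) (Leaf True)))) :: 'a::field_char_0) = (5/24)" by (simp add: NORM_def)
lemma tab35: "(coef NORM (Some (Node (Leaf False) (Node (Node (Leaf True) (Leaf False)) (Leaf False)))) :: 'a::field_char_0) = (-1/24)" by (simp add: NORM_def)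
lemma tab36: "(coef NORM (Some (Node (Leaf False) (Node (Node (Leaf True) (Leaf False)) (Leaf True)))) :: 'a::field_char_0) = (-1/24)" by (simp add: NORM_def)
lemma tab37: "(coef NORM (Some (Node (Leaf False) (Node (Node (Leaf True) (Leaf True)) (Leaf False)))) :: 'a::field_char_0) = (1/12)" by (simp add: NORM_def)
lemma tab38: "(coef NORM (Some (Node (Leaf False) (Node (Node (Leaf True) (Leaf True)) (Leaf True)))) :: 'a::field_char_0) = (1/6)" by (simp add: NORM_def)
lemma tab39: "(coef NORM (Some (Node (Leaf True) (Node (Leaf False) (Node (Leaf False) (Leaf False))))) :: 'a::field_char_0) = (0)" by (simp add: NORM_def)
lemma tab40: "(coef NORM (Some (Node (Leaf True) (Node (Leaf False) (Node (Leaf False) (Leaf True))))) :: 'a::field_char_0) = (1/8)" by (simp add: NORM_def)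
lemma tab41: "(coef NORM (Some (Node (Leaf True) (Node (Leaf False) (Node (Leaf True) (Leaf False))))) :: 'a::field_char_0) = (-1/8)" by (simp add: NORM_def)
lemma tab42: "(coef NORM (Some (Node (Leaf True) (Node (Leaf False) (Node (Leaf True) (Leaf True))))) :: 'a::field_char_0) = (-1/4)" by (simp add: NORM_def)
lemma tab43: "(coef NORM (Some (Node (Leaf True) (Node (Leaf True) (Node (Leaf False) (Leaf False))))) :: 'a::field_char_0) = (0)" by (simp add: NORM_def)
lemma tab44: "(coef NORM (Some (Node (Leaf True) (Node (Leaf True) (Node (Leaf False) (Leaf True))))) :: 'a::field_char_0) = (1/8)" by (simp add: NORM_def)
lemma tab45: "(coef NORM (Some (Node (Leaf True) (Node (Leaf True) (Node (Leaf True) (Leaf False))))) :: 'a::field_char_0) = (-1/8)" by (simp add: NORM_def)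
lemma tab46: "(coef NORM (Some (Node (Leaf True) (Node (Leaf True) (Node (Leaf True) (Leaf True))))) :: 'a::field_char_0) = (0)" by (simp add: NORM_def)
lemma tab47: "(coef NORM (Some (Node (Leaf True) (Node (Node (Leaf False) (Leaf False)) (Leaf False)))) :: 'a::field_char_0) = (0)" by (simp add: NORM_def)
lemma tab48: "(coef NORM (Some (Node (Leaf True) (Node (Node (Leaf False) (Leaf False)) (Leaf True)))) :: 'a::field_char_0) = (-1/6)" by (simp add: NORM_def)
lemma tab49: "(coef NORM (Some (Node (Leaf True) (Node (Node (Leaf False) (Leaf True)) (Leaf False)))) :: 'a::field_char_0) = (5/24)" by (simp add: NORM_def)
lemma tab50: "(coef NORM (Some (Node (Leaf True) (Node (Node (Leaf False) (Leaf True)) (Leaf True)))) :: 'a::field_char_0) = (5/24)" by (simp add: NORM_def)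
lemma tab51: "(coef NORM (Some (Node (Leaf True) (Node (Node (Leaf True) (Leaf False)) (Leaf False)))) :: 'a::field_char_0) = (-1/24)" by (simp add: NORM_def)
lemma tab52: "(coef NORM (Some (Node (Leaf True) (Node (Node (Leaf True) (Leaf False)) (Leaf True)))) :: 'a::field_char_0) = (-1/24)" by (simp add: NORM_def)
lemma tab53: "(coef NORM (Some (Node (Leaf True) (Node (Node (Leaf True) (Leaf True)) (Leaf False)))) :: 'a::field_char_0) = (1/12)" by (simp add: NORM_def)
lemma tab54: "(coef NORM (Some (Node (Leaf True) (Node (Node (Leaf True) (Leaf True)) (Leaf True)))) :: 'a::field_char_0) = (0)" by (simp add: NORM_def)
lemma tab55: "(coef NORM (Some (Node (Node (Leaf False) (Leaf False)) (Node (Leaf False) (Leaf False)))) :: 'a::field_char_0) = (0)" by (simp add: NORM_def)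
lemma tab56: "(coef NORM (Some (Node (Node (Leaf False) (Leaf False)) (Node (Leaf False) (Leaf True)))) :: 'a::field_char_0) = (-1/12)" by (simp add: NORM_def)
lemma tab57: "(coef NORM (Some (Node (Node (Leaf False) (Leaf False)) (Node (Leaf True) (Leaf False)))) :: 'a::field_char_0) = (1/12)" by (simp add: NORM_def)
lemma tab58: "(coef NORM (Some (Node (Node (Leaf False) (Leaf False)) (Node (Leaf True) (Leaf True)))) :: 'a::field_char_0) = (1/4)" by (simp add: NORM_def)
lemma tab59: "(coef NORM (Some (Node (Node (Leaf False) (Leaf True)) (Node (Leaf False) (Leaf False)))) :: 'a::field_char_0) = (0)" by (simp add: NORM_def)
lemma tab60: "(coef NORM (Some (Node (Node (Leaf False) (Leaf True)) (Node (Leaf False) (Leaf True)))) :: 'a::field_char_0) = (-5/24)" by (simp add: NORM_def)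
lemma tab61: "(coef NORM (Some (Node (Node (Leaf False) (Leaf True)) (Node (Leaf True) (Leaf False)))) :: 'a::field_char_0) = (5/24)" by (simp add: NORM_def)
lemma tab62: "(coef NORM (Some (Node (Node (Leaf False) (Leaf True)) (Node (Leaf True) (Leaf True)))) :: 'a::field_char_0) = (0)" by (simp add: NORM_def)
lemma tab63: "(coef NORM (Some (Node (Node (Leaf True) (Leaf False)) (Node (Leaf False) (Leaf False)))) :: 'a::field_char_0) = (0)" by (simp add: NORM_def)
lemma tab64: "(coef NORM (Some (Node (Node (Leaf True) (Leaf False)) (Node (Leaf False) (Leaf True)))) :: 'a::field_char_0) = (1/24)" by (simp add: NORM_def)
lemma tab65: "(coef NORM (Some (Node (Node (Leaf True) (Leaf False)) (Node (Leaf True) (Leaf False)))) :: 'a::field_char_0) = (-1/24)" by (simp add: NORM_def)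
lemma tab66: "(coef NORM (Some (Node (Node (Leaf True) (Leaf False)) (Node (Leaf True) (Leaf True)))) :: 'a::field_char_0) = (0)" by (simp add: NORM_def)
lemma tab67: "(coef NORM (Some (Node (Node (Leaf True) (Leaf True)) (Node (Leaf False) (Leaf False)))) :: 'a::field_char_0) = (0)" by (simp add: NORM_def)
lemma tab68: "(coef NORM (Some (Node (Node (Leaf True) (Leaf True)) (Node (Leaf False) (Leaf True)))) :: 'a::field_char_0) = (-1/12)" by (simp add: NORM_def)
lemma tab69: "(coef NORM (Some (Node (Node (Leaf True) (Leaf True)) (Node (Leaf True) (Leaf False)))) :: 'a::field_char_0) = (1/12)" by (simp add: NORM_def)
lemma tab70: "(coef NORM (Some (Node (Node (Leaf True) (Leaf True)) (Node (Leaf True) (Leaf True)))) :: 'a::field_char_0) = (0)" by (simp add: NORM_def)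
lemma tab71: "(coef NORM (Some (Node (Node (Leaf False) (Node (Leaf False) (Leaf False))) (Leaf False))) :: 'a::field_char_0) = (0)" by (simp add: NORM_def)
lemma tab72: "(coef NORM (Some (Node (Node (Leaf False) (Node (Leaf False) (Leaf False))) (Leaf True))) :: 'a::field_char_0) = (0)" by (simp add: NORM_def)
lemma tab73: "(coef NORM (Some (Node (Node (Leaf False) (Node (Leaf False) (Leaf True))) (Leaf False))) :: 'a::field_char_0) = (1/24)" by (simp add: NORM_def)
lemma tab74: "(coef NORM (Some (Node (Node (Leaf False) (Node (Leaf False) (Leaf True))) (Leaf True))) :: 'a::field_char_0) = (1/24)" by (simp add: NORM_def)
lemma tab75: "(coef NORM (Some (Node (Node (Leaf False) (Node (Leaf True) (Leaf False))) (Leaf False))) :: 'a::field_char_0) = (-1/24)" by (simp add: NORM_def)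
lemma tab76: "(coef NORM (Some (Node (Node (Leaf False) (Node (Leaf True) (Leaf False))) (Leaf True))) :: 'a::field_char_0) = (-1/24)" by (simp add: NORM_def)
lemma tab77: "(coef NORM (Some (Node (Node (Leaf False) (Node (Leaf True) (Leaf True))) (Leaf False))) :: 'a::field_char_0) = (-1/4)" by (simp add: NORM_def)
lemma tab78: "(coef NORM (Some (Node (Node (Leaf False) (Node (Leaf True) (Leaf True))) (Leaf True))) :: 'a::field_char_0) = (-1/4)" by (simp add: NORM_def)
lemma tab79: "(coef NORM (Some (Node (Node (Leaf True) (Node (Leaf False) (Leaf False))) (Leaf False))) :: 'a::field_char_0) = (0)" by (simp add: NORM_def)
lemma tab80: "(coef NORM (Some (Node (Node (Leaf True) (Node (Leaf False) (Leaf False))) (Leaf True))) :: 'a::field_char_0) = (0)" by (simp add: NORM_def)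
lemma tab81: "(coef NORM (Some (Node (Node (Leaf True) (Node (Leaf False) (Leaf True))) (Leaf False))) :: 'a::field_char_0) = (1/24)" by (simp add: NORM_def)
lemma tab82: "(coef NORM (Some (Node (Node (Leaf True) (Node (Leaf False) (Leaf True))) (Leaf True))) :: 'a::field_char_0) = (1/24)" by (simp add: NORM_def)
lemma tab83: "(coef NORM (Some (Node (Node (Leaf True) (Node (Leaf True) (Leaf False))) (Leaf False))) :: 'a::field_char_0) = (-1/24)" by (simp add: NORM_def)
lemma tab84: "(coef NORM (Some (Node (Node (Leaf True) (Node (Leaf True) (Leaf False))) (Leaf True))) :: 'a::field_char_0) = (-1/24)" by (simp add: NORM_def)
lemma tab85: "(coef NORM (Some (Node (Node (Leaf True) (Node (Leaf True) (Leaf True))) (Leaf False))) :: 'a::field_char_0) = (0)" by (simp add: NORM_def)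
lemma tab86: "(coef NORM (Some (Node (Node (Leaf True) (Node (Leaf True) (Leaf True))) (Leaf True))) :: 'a::field_char_0) = (0)" by (simp add: NORM_def)
lemma tab87: "(coef NORM (Some (Node (Node (Node (Leaf False) (Leaf False)) (Leaf False)) (Leaf False))) :: 'a::field_char_0) = (0)" by (simp add: NORM_def)
lemma tab88: "(coef NORM (Some (Node (Node (Node (Leaf False) (Leaf False)) (Leaf False)) (Leaf True))) :: 'a::field_char_0) = (1/8)" by (simp add: NORM_def)
lemma tab89: "(coef NORM (Some (Node (Node (Node (Leaf False) (Leaf False)) (Leaf True)) (Leaf False))) :: 'a::field_char_0) = (-5/24)" by (simp add: NORM_def)
lemma tab90: "(coef NORM (Some (Node (Node (Node (Leaf False) (Leaf False)) (Leaf True)) (Leaf True))) :: 'a::field_char_0) = (-5/24)" by (simp add: NORM_def)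
lemma tab91: "(coef NORM (Some (Node (Node (Node (Leaf False) (Leaf True)) (Leaf False)) (Leaf False))) :: 'a::field_char_0) = (1/12)" by (simp add: NORM_def)
lemma tab92: "(coef NORM (Some (Node (Node (Node (Leaf False) (Leaf True)) (Leaf False)) (Leaf True))) :: 'a::field_char_0) = (1/12)" by (simp add: NORM_def)
lemma tab93: "(coef NORM (Some (Node (Node (Node (Leaf False) (Leaf True)) (Leaf True)) (Leaf False))) :: 'a::field_char_0) = (1/12)" by (simp add: NORM_def)
lemma tab94: "(coef NORM (Some (Node (Node (Node (Leaf False) (Leaf True)) (Leaf True)) (Leaf True))) :: 'a::field_char_0) = (1/12)" by (simp add: NORM_def)
lemma tab95: "(coef NORM (Some (Node (Node (Node (Leaf True) (Leaf False)) (Leaf False)) (Leaf False))) :: 'a::field_char_0) = (0)" by (simp add: NORM_def)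
lemma tab96: "(coef NORM (Some (Node (Node (Node (Leaf True) (Leaf False)) (Leaf False)) (Leaf True))) :: 'a::field_char_0) = (0)" by (simp add: NORM_def)
lemma tab97: "(coef NORM (Some (Node (Node (Node (Leaf True) (Leaf False)) (Leaf True)) (Leaf False))) :: 'a::field_char_0) = (0)" by (simp add: NORM_def)
lemma tab98: "(coef NORM (Some (Node (Node (Node (Leaf True) (Leaf False)) (Leaf True)) (Leaf True))) :: 'a::field_char_0) = (0)" by (simp add: NORM_def)
lemma tab99: "(coef NORM (Some (Node (Node (Node (Leaf True) (Leaf True)) (Leaf False)) (Leaf False))) :: 'a::field_char_0) = (1/24)" by (simp add: NORM_def)
lemma tab100: "(coef NORM (Some (Node (Node (Node (Leaf True) (Leaf True)) (Leaf False)) (Leaf True))) :: 'a::field_char_0) = (1/24)" by (simp add: NORM_def)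
lemma tab101: "(coef NORM (Some (Node (Node (Node (Leaf True) (Leaf True)) (Leaf True)) (Leaf False))) :: 'a::field_char_0) = (-1/24)" by (simp add: NORM_def)
lemma tab102: "(coef NORM (Some (Node (Node (Node (Leaf True) (Leaf True)) (Leaf True)) (Leaf True))) :: 'a::field_char_0) = (0)" by (simp add: NORM_def)
lemmas tabs = tab0 tab1 tab2 tab3 tab4 tab5 tab6 tab7 tab8 tab9 tab10 tab11 tab12 tab13 tab14 tab15 tab16 tab17 tab18 tab19 tab20 tab21 tab22 tab23 tab24 tab25 tab26 tab27 tab28 tab29 tab30 tab31 tab32 tab33 tab34 tab35 tab36 tab37 tab38 tab39 tab40 tab41 tab42 tab43 tab44 tab45 tab46 tab47 tab48 tab49 tab50 tab51 tab52 tab53 tab54 tab55 tab56 tab57 tab58 tab59 tab60 tab61 tab62 tab63 tab64 tab65 tab66 tab67 tab68 tab69 tab70 tab71 tab72 tab73 tab74 tab75 tab76 tab77 tab78 tab79 tab80 tab81 tab82 tab83 tab84 tab85 tab86 tab87 tab88 tab89 tab90 tab91 tab92 tab93 tab94 tab95 tab96 tab97 tab98 tab99 tab100 tab101 tab102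
lemma pw1: "(exp_l (coef NORM) (Some (Leaf False)) :: 'a::field_char_0) = smul (exp_l sX) (exp_l sY) (Some (Leaf False))" by (simp add: evalrules tabs)
lemma pw2: "(exp_l (coef NORM) (Some (Leaf True)) :: 'a::field_char_0) = smul (exp_l sX) (exp_l sY) (Some (Leaf True))" by (simp add: evalrules tabs)
lemma pw3: "(exp_l (coef NORM) (Some (Node (Leaf False) (Leaf False))) :: 'a::field_char_0) = smul (exp_l sX) (exp_l sY) (Some (Node (Leaf False) (Leaf False)))" by (simp add: evalrules tabs)
lemma pw4: "(exp_l (coef NORM) (Some (Node (Leaf False) (Leaf True))) :: 'a::field_char_0) = smul (exp_l sX) (exp_l sY) (Some (Node (Leaf False) (Leaf True)))" by (simp add: evalrules tabs)
lemma pw5: "(exp_l (coef NORM) (Some (Node (Leaf True) (Leaf False))) :: 'a::field_char_0) = smul (exp_l sX) (exp_l sY) (Some (Node (Leaf True) (Leaf False)))" by (simp add: evalrules tabs)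
lemma pw6: "(exp_l (coef NORM) (Some (Node (Leaf True) (Leaf True))) :: 'a::field_char_0) = smul (exp_l sX) (exp_l sY) (Some (Node (Leaf True) (Leaf True)))" by (simp add: evalrules tabs)
lemma pw7: "(exp_l (coef NORM) (Some (Node (Leaf False) (Node (Leaf False) (Leaf False)))) :: 'a::field_char_0) = smul (exp_l sX) (exp_l sY) (Some (Node (Leaf False) (Node (Leaf False) (Leaf False))))" by (simp add: evalrules tabs)
lemma pw8: "(exp_l (coef NORM) (Some (Node (Leaf False) (Node (Leaf False) (Leaf True)))) :: 'a::field_char_0) = smul (exp_l sX) (exp_l sY) (Some (Node (Leaf False) (Node (Leaf False) (Leaf True))))" by (simp add: evalrules tabs)
lemma pw9: "(exp_l (coef NORM) (Some (Node (Leaf False) (Node (Leaf True) (Leaf False)))) :: 'a::field_char_0) = smul (exp_l sX) (exp_l sY) (Some (Node (Leaf False) (Node (Leaf True) (Leaf False))))" by (simp add: evalrules tabs)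
lemma pw10: "(exp_l (coef NORM) (Some (Node (Leaf False) (Node (Leaf True) (Leaf True)))) :: 'a::field_char_0) = smul (exp_l sX) (exp_l sY) (Some (Node (Leaf False) (Node (Leaf True) (Leaf True))))" by (simp add: evalrules tabs)
lemma pw11: "(exp_l (coef NORM) (Some (Node (Leaf True) (Node (Leaf False) (Leaf False)))) :: 'a::field_char_0) = smul (exp_l sX) (exp_l sY) (Some (Node (Leaf True) (Node (Leaf False) (Leaf False))))" by (simp add: evalrules tabs)
lemma pw12: "(exp_l (coef NORM) (Some (Node (Leaf True) (Node (Leaf False) (Leaf True)))) :: 'a::field_char_0) = smul (exp_l sX) (exp_l sY) (Some (Node (Leaf True) (Node (Leaf False) (Leaf True))))" by (simp add: evalrules tabs)
lemma pw13: "(exp_l (coef NORM) (Some (Node (Leaf True) (Node (Leaf True) (Leaf False)))) :: 'a::field_char_0) = smul (exp_l sX) (exp_l sY) (Some (Node (Leaf True) (Node (Leaf True) (Leaf False))))" by (simp add: evalrules tabs)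
lemma pw14: "(exp_l (coef NORM) (Some (Node (Leaf True) (Node (Leaf True) (Leaf True)))) :: 'a::field_char_0) = smul (exp_l sX) (exp_l sY) (Some (Node (Leaf True) (Node (Leaf True) (Leaf True))))" by (simp add: evalrules tabs)
lemma pw15: "(exp_l (coef NORM) (Some (Node (Node (Leaf False) (Leaf False)) (Leaf False))) :: 'a::field_char_0) = smul (exp_l sX) (exp_l sY) (Some (Node (Node (Leaf False) (Leaf False)) (Leaf False)))" by (simp add: evalrules tabs)
lemma pw16: "(exp_l (coef NORM) (Some (Node (Node (Leaf False) (Leaf False)) (Leaf True))) :: 'a::field_char_0) = smul (exp_l sX) (exp_l sY) (Some (Node (Node (Leaf False) (Leaf False)) (Leaf True)))" by (simp add: evalrules tabs)
lemma pw17: "(exp_l (coef NORM) (Some (Node (Node (Leaf False) (Leaf True)) (Leaf False))) :: 'a::field_char_0) = smul (exp_l sX) (exp_l sY) (Some (Node (Node (Leaf False) (Leaf True)) (Leaf False)))" by (simp add: evalrules tabs)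
lemma pw18: "(exp_l (coef NORM) (Some (Node (Node (Leaf False) (Leaf True)) (Leaf True))) :: 'a::field_char_0) = smul (exp_l sX) (exp_l sY) (Some (Node (Node (Leaf False) (Leaf True)) (Leaf True)))" by (simp add: evalrules tabs)
lemma pw19: "(exp_l (coef NORM) (Some (Node (Node (Leaf True) (Leaf False)) (Leaf False))) :: 'a::field_char_0) = smul (exp_l sX) (exp_l sY) (Some (Node (Node (Leaf True) (Leaf False)) (Leaf False)))" by (simp add: evalrules tabs)
lemma pw20: "(exp_l (coef NORM) (Some (Node (Node (Leaf True) (Leaf False)) (Leaf True))) :: 'a::field_char_0) = smul (exp_l sX) (exp_l sY) (Some (Node (Node (Leaf True) (Leaf False)) (Leaf True)))" by (simp add: evalrules tabs)
lemma pw21: "(exp_l (coef NORM) (Some (Node (Node (Leaf True) (Leaf True)) (Leaf False))) :: 'a::field_char_0) = smul (exp_l sX) (exp_l sY) (Some (Node (Node (Leaf True) (Leaf True)) (Leaf False)))" by (simp add: evalrules tabs)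
lemma pw22: "(exp_l (coef NORM) (Some (Node (Node (Leaf True) (Leaf True)) (Leaf True))) :: 'a::field_char_0) = smul (exp_l sX) (exp_l sY) (Some (Node (Node (Leaf True) (Leaf True)) (Leaf True)))" by (simp add: evalrules tabs)
lemma pw23: "(exp_l (coef NORM) (Some (Node (Leaf False) (Node (Leaf False) (Node (Leaf False) (Leaf False))))) :: 'a::field_char_0) = smul (exp_l sX) (exp_l sY) (Some (Node (Leaf False) (Node (Leaf False) (Node (Leaf False) (Leaf False)))))" by (simp add: evalrules tabs)
lemma pw24: "(exp_l (coef NORM) (Some (Node (Leaf False) (Node (Leaf False) (Node (Leaf False) (Leaf True))))) :: 'a::field_char_0) = smul (exp_l sX) (exp_l sY) (Some (Node (Leaf False) (Node (Leaf False) (Node (Leaf False) (Leaf True)))))" by (simp add: evalrules tabs)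
lemma pw25: "(exp_l (coef NORM) (Some (Node (Leaf False) (Node (Leaf False) (Node (Leaf True) (Leaf False))))) :: 'a::field_char_0) = smul (exp_l sX) (exp_l sY) (Some (Node (Leaf False) (Node (Leaf False) (Node (Leaf True) (Leaf False)))))" by (simp add: evalrules tabs)
lemma pw26: "(exp_l (coef NORM) (Some (Node (Leaf False) (Node (Leaf False) (Node (Leaf True) (Leaf True))))) :: 'a::field_char_0) = smul (exp_l sX) (exp_l sY) (Some (Node (Leaf False) (Node (Leaf False) (Node (Leaf True) (Leaf True)))))" by (simp add: evalrules tabs)
lemma pw27: "(exp_l (coef NORM) (Some (Node (Leaf False) (Node (Leaf True) (Node (Leaf False) (Leaf False))))) :: 'a::field_char_0) = smul (exp_l sX) (exp_l sY) (Some (Node (Leaf False) (Node (Leaf True) (Node (Leaf False) (Leaf False)))))" by (simp add: evalrules tabs)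
lemma pw28: "(exp_l (coef NORM) (Some (Node (Leaf False) (Node (Leaf True) (Node (Leaf False) (Leaf True))))) :: 'a::field_char_0) = smul (exp_l sX) (exp_l sY) (Some (Node (Leaf False) (Node (Leaf True) (Node (Leaf False) (Leaf True)))))" by (simp add: evalrules tabs)
lemma pw29: "(exp_l (coef NORM) (Some (Node (Leaf False) (Node (Leaf True) (Node (Leaf True) (Leaf False))))) :: 'a::field_char_0) = smul (exp_l sX) (exp_l sY) (Some (Node (Leaf False) (Node (Leaf True) (Node (Leaf True) (Leaf False)))))" by (simp add: evalrules tabs)
lemma pw30: "(exp_l (coef NORM) (Some (Node (Leaf False) (Node (Leaf True) (Node (Leaf True) (Leaf True))))) :: 'a::field_char_0) = smul (exp_l sX) (exp_l sY) (Some (Node (Leaf False) (Node (Leaf True) (Node (Leaf True) (Leaf True)))))" by (simp add: evalrules tabs)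
lemma pw31: "(exp_l (coef NORM) (Some (Node (Leaf False) (Node (Node (Leaf False) (Leaf False)) (Leaf False)))) :: 'a::field_char_0) = smul (exp_l sX) (exp_l sY) (Some (Node (Leaf False) (Node (Node (Leaf False) (Leaf False)) (Leaf False))))" by (simp add: evalrules tabs)
lemma pw32: "(exp_l (coef NORM) (Some (Node (Leaf False) (Node (Node (Leaf False) (Leaf False)) (Leaf True)))) :: 'a::field_char_0) = smul (exp_l sX) (exp_l sY) (Some (Node (Leaf False) (Node (Node (Leaf False) (Leaf False)) (Leaf True))))" by (simp add: evalrules tabs)
lemma pw33: "(exp_l (coef NORM) (Some (Node (Leaf False) (Node (Node (Leaf False) (Leaf True)) (Leaf False)))) :: 'a::field_char_0) = smul (exp_l sX) (exp_l sY) (Some (Node (Leaf False) (Node (Node (Leaf False) (Leaf True)) (Leaf False))))" by (simp add: evalrules tabs)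
lemma pw34: "(exp_l (coef NORM) (Some (Node (Leaf False) (Node (Node (Leaf False) (Leaf True)) (Leaf True)))) :: 'a::field_char_0) = smul (exp_l sX) (exp_l sY) (Some (Node (Leaf False) (Node (Node (Leaf False) (Leaf True)) (Leaf True))))" by (simp add: evalrules tabs)
lemma pw35: "(exp_l (coef NORM) (Some (Node (Leaf False) (Node (Node (Leaf True) (Leaf False)) (Leaf False)))) :: 'a::field_char_0) = smul (exp_l sX) (exp_l sY) (Some (Node (Leaf False) (Node (Node (Leaf True) (Leaf False)) (Leaf False))))" by (simp add: evalrules tabs)
lemma pw36: "(exp_l (coef NORM) (Some (Node (Leaf False) (Node (Node (Leaf True) (Leaf False)) (Leaf True)))) :: 'a::field_char_0) = smul (exp_l sX) (exp_l sY) (Some (Node (Leaf False) (Node (Node (Leaf True) (Leaf False)) (Leaf True))))" by (simp add: evalrules tabs)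
lemma pw37: "(exp_l (coef NORM) (Some (Node (Leaf False) (Node (Node (Leaf True) (Leaf True)) (Leaf False)))) :: 'a::field_char_0) = smul (exp_l sX) (exp_l sY) (Some (Node (Leaf False) (Node (Node (Leaf True) (Leaf True)) (Leaf False))))" by (simp add: evalrules tabs)
lemma pw38: "(exp_l (coef NORM) (Some (Node (Leaf False) (Node (Node (Leaf True) (Leaf True)) (Leaf True)))) :: 'a::field_char_0) = smul (exp_l sX) (exp_l sY) (Some (Node (Leaf False) (Node (Node (Leaf True) (Leaf True)) (Leaf True))))" by (simp add: evalrules tabs)
lemma pw39: "(exp_l (coef NORM) (Some (Node (Leaf True) (Node (Leaf False) (Node (Leaf False) (Leaf False))))) :: 'a::field_char_0) = smul (exp_l sX) (exp_l sY) (Some (Node (Leaf True) (Node (Leaf False) (Node (Leaf False) (Leaf False)))))" by (simp add: evalrules tabs)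
lemma pw40: "(exp_l (coef NORM) (Some (Node (Leaf True) (Node (Leaf False) (Node (Leaf False) (Leaf True))))) :: 'a::field_char_0) = smul (exp_l sX) (exp_l sY) (Some (Node (Leaf True) (Node (Leaf False) (Node (Leaf False) (Leaf True)))))" by (simp add: evalrules tabs)
lemma pw41: "(exp_l (coef NORM) (Some (Node (Leaf True) (Node (Leaf False) (Node (Leaf True) (Leaf False))))) :: 'a::field_char_0) = smul (exp_l sX) (exp_l sY) (Some (Node (Leaf True) (Node (Leaf False) (Node (Leaf True) (Leaf False)))))" by (simp add: evalrules tabs)
lemma pw42: "(exp_l (coef NORM) (Some (Node (Leaf True) (Node (Leaf False) (Node (Leaf True) (Leaf True))))) :: 'a::field_char_0) = smul (exp_l sX) (exp_l sY) (Some (Node (Leaf True) (Node (Leaf False) (Node (Leaf True) (Leaf True)))))" by (simp add: evalrules tabs)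
lemma pw43: "(exp_l (coef NORM) (Some (Node (Leaf True) (Node (Leaf True) (Node (Leaf False) (Leaf False))))) :: 'a::field_char_0) = smul (exp_l sX) (exp_l sY) (Some (Node (Leaf True) (Node (Leaf True) (Node (Leaf False) (Leaf False)))))" by (simp add: evalrules tabs)
lemma pw44: "(exp_l (coef NORM) (Some (Node (Leaf True) (Node (Leaf True) (Node (Leaf False) (Leaf True))))) :: 'a::field_char_0) = smul (exp_l sX) (exp_l sY) (Some (Node (Leaf True) (Node (Leaf True) (Node (Leaf False) (Leaf True)))))" by (simp add: evalrules tabs)
lemma pw45: "(exp_l (coef NORM) (Some (Node (Leaf True) (Node (Leaf True) (Node (Leaf True) (Leaf False))))) :: 'a::field_char_0) = smul (exp_l sX) (exp_l sY) (Some (Node (Leaf True) (Node (Leaf True) (Node (Leaf True) (Leaf False)))))" by (simp add: evalrules tabs)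
lemma pw46: "(exp_l (coef NORM) (Some (Node (Leaf True) (Node (Leaf True) (Node (Leaf True) (Leaf True))))) :: 'a::field_char_0) = smul (exp_l sX) (exp_l sY) (Some (Node (Leaf True) (Node (Leaf True) (Node (Leaf True) (Leaf True)))))" by (simp add: evalrules tabs)
lemma pw47: "(exp_l (coef NORM) (Some (Node (Leaf True) (Node (Node (Leaf False) (Leaf False)) (Leaf False)))) :: 'a::field_char_0) = smul (exp_l sX) (exp_l sY) (Some (Node (Leaf True) (Node (Node (Leaf False) (Leaf False)) (Leaf False))))" by (simp add: evalrules tabs)
lemma pw48: "(exp_l (coef NORM) (Some (Node (Leaf True) (Node (Node (Leaf False) (Leaf False)) (Leaf True)))) :: 'a::field_char_0) = smul (exp_l sX) (exp_l sY) (Some (Node (Leaf True) (Node (Node (Leaf False) (Leaf False)) (Leaf True))))" by (simp add: evalrules tabs)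
lemma pw49: "(exp_l (coef NORM) (Some (Node (Leaf True) (Node (Node (Leaf False) (Leaf True)) (Leaf False)))) :: 'a::field_char_0) = smul (exp_l sX) (exp_l sY) (Some (Node (Leaf True) (Node (Node (Leaf False) (Leaf True)) (Leaf False))))" by (simp add: evalrules tabs)
lemma pw50: "(exp_l (coef NORM) (Some (Node (Leaf True) (Node (Node (Leaf False) (Leaf True)) (Leaf True)))) :: 'a::field_char_0) = smul (exp_l sX) (exp_l sY) (Some (Node (Leaf True) (Node (Node (Leaf False) (Leaf True)) (Leaf True))))" by (simp add: evalrules tabs)
lemma pw51: "(exp_l (coef NORM) (Some (Node (Leaf True) (Node (Node (Leaf True) (Leaf False)) (Leaf False)))) :: 'a::field_char_0) = smul (exp_l sX) (exp_l sY) (Some (Node (Leaf True) (Node (Node (Leaf True) (Leaf False)) (Leaf False))))" by (simp add: evalrules tabs)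
lemma pw52: "(exp_l (coef NORM) (Some (Node (Leaf True) (Node (Node (Leaf True) (Leaf False)) (Leaf True)))) :: 'a::field_char_0) = smul (exp_l sX) (exp_l sY) (Some (Node (Leaf True) (Node (Node (Leaf True) (Leaf False)) (Leaf True))))" by (simp add: evalrules tabs)
lemma pw53: "(exp_l (coef NORM) (Some (Node (Leaf True) (Node (Node (Leaf True) (Leaf True)) (Leaf False)))) :: 'a::field_char_0) = smul (exp_l sX) (exp_l sY) (Some (Node (Leaf True) (Node (Node (Leaf True) (Leaf True)) (Leaf False))))" by (simp add: evalrules tabs)
lemma pw54: "(exp_l (coef NORM) (Some (Node (Leaf True) (Node (Node (Leaf True) (Leaf True)) (Leaf True)))) :: 'a::field_char_0) = smul (exp_l sX) (exp_l sY) (Some (Node (Leaf True) (Node (Node (Leaf True) (Leaf True)) (Leaf True))))" by (simp add: evalrules tabs)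
lemma pw55: "(exp_l (coef NORM) (Some (Node (Node (Leaf False) (Leaf False)) (Node (Leaf False) (Leaf False)))) :: 'a::field_char_0) = smul (exp_l sX) (exp_l sY) (Some (Node (Node (Leaf False) (Leaf False)) (Node (Leaf False) (Leaf False))))" by (simp add: evalrules tabs)
lemma pw56: "(exp_l (coef NORM) (Some (Node (Node (Leaf False) (Leaf False)) (Node (Leaf False) (Leaf True)))) :: 'a::field_char_0) = smul (exp_l sX) (exp_l sY) (Some (Node (Node (Leaf False) (Leaf False)) (Node (Leaf False) (Leaf True))))" by (simp add: evalrules tabs)
lemma pw57: "(exp_l (coef NORM) (Some (Node (Node (Leaf False) (Leaf False)) (Node (Leaf True) (Leaf False)))) :: 'a::field_char_0) = smul (exp_l sX) (exp_l sY) (Some (Node (Node (Leaf False) (Leaf False)) (Node (Leaf True) (Leaf False))))" by (simp add: evalrules tabs)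
lemma pw58: "(exp_l (coef NORM) (Some (Node (Node (Leaf False) (Leaf False)) (Node (Leaf True) (Leaf True)))) :: 'a::field_char_0) = smul (exp_l sX) (exp_l sY) (Some (Node (Node (Leaf False) (Leaf False)) (Node (Leaf True) (Leaf True))))" by (simp add: evalrules tabs)
lemma pw59: "(exp_l (coef NORM) (Some (Node (Node (Leaf False) (Leaf True)) (Node (Leaf False) (Leaf False)))) :: 'a::field_char_0) = smul (exp_l sX) (exp_l sY) (Some (Node (Node (Leaf False) (Leaf True)) (Node (Leaf False) (Leaf False))))" by (simp add: evalrules tabs)
lemma pw60: "(exp_l (coef NORM) (Some (Node (Node (Leaf False) (Leaf True)) (Node (Leaf False) (Leaf True)))) :: 'a::field_char_0) = smul (exp_l sX) (exp_l sY) (Some (Node (Node (Leaf False) (Leaf True)) (Node (Leaf False) (Leaf True))))" by (simp add: evalrules tabs)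
lemma pw61: "(exp_l (coef NORM) (Some (Node (Node (Leaf False) (Leaf True)) (Node (Leaf True) (Leaf False)))) :: 'a::field_char_0) = smul (exp_l sX) (exp_l sY) (Some (Node (Node (Leaf False) (Leaf True)) (Node (Leaf True) (Leaf False))))" by (simp add: evalrules tabs)
lemma pw62: "(exp_l (coef NORM) (Some (Node (Node (Leaf False) (Leaf True)) (Node (Leaf True) (Leaf True)))) :: 'a::field_char_0) = smul (exp_l sX) (exp_l sY) (Some (Node (Node (Leaf False) (Leaf True)) (Node (Leaf True) (Leaf True))))" by (simp add: evalrules tabs)
lemma pw63: "(exp_l (coef NORM) (Some (Node (Node (Leaf True) (Leaf False)) (Node (Leaf False) (Leaf False)))) :: 'a::field_char_0) = smul (exp_l sX) (exp_l sY) (Some (Node (Node (Leaf True) (Leaf False)) (Node (Leaf False) (Leaf False))))" by (simp add: evalrules tabs)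
lemma pw64: "(exp_l (coef NORM) (Some (Node (Node (Leaf True) (Leaf False)) (Node (Leaf False) (Leaf True)))) :: 'a::field_char_0) = smul (exp_l sX) (exp_l sY) (Some (Node (Node (Leaf True) (Leaf False)) (Node (Leaf False) (Leaf True))))" by (simp add: evalrules tabs)
lemma pw65: "(exp_l (coef NORM) (Some (Node (Node (Leaf True) (Leaf False)) (Node (Leaf True) (Leaf False)))) :: 'a::field_char_0) = smul (exp_l sX) (exp_l sY) (Some (Node (Node (Leaf True) (Leaf False)) (Node (Leaf True) (Leaf False))))" by (simp add: evalrules tabs)
lemma pw66: "(exp_l (coef NORM) (Some (Node (Node (Leaf True) (Leaf False)) (Node (Leaf True) (Leaf True)))) :: 'a::field_char_0) = smul (exp_l sX) (exp_l sY) (Some (Node (Node (Leaf True) (Leaf False)) (Node (Leaf True) (Leaf True))))" by (simp add: evalrules tabs)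
lemma pw67: "(exp_l (coef NORM) (Some (Node (Node (Leaf True) (Leaf True)) (Node (Leaf False) (Leaf False)))) :: 'a::field_char_0) = smul (exp_l sX) (exp_l sY) (Some (Node (Node (Leaf True) (Leaf True)) (Node (Leaf False) (Leaf False))))" by (simp add: evalrules tabs)
lemma pw68: "(exp_l (coef NORM) (Some (Node (Node (Leaf True) (Leaf True)) (Node (Leaf False) (Leaf True)))) :: 'a::field_char_0) = smul (exp_l sX) (exp_l sY) (Some (Node (Node (Leaf True) (Leaf True)) (Node (Leaf False) (Leaf True))))" by (simp add: evalrules tabs)
lemma pw69: "(exp_l (coef NORM) (Some (Node (Node (Leaf True) (Leaf True)) (Node (Leaf True) (Leaf False)))) :: 'a::field_char_0) = smul (exp_l sX) (exp_l sY) (Some (Node (Node (Leaf True) (Leaf True)) (Node (Leaf True) (Leaf False))))" by (simp add: evalrules tabs)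
lemma pw70: "(exp_l (coef NORM) (Some (Node (Node (Leaf True) (Leaf True)) (Node (Leaf True) (Leaf True)))) :: 'a::field_char_0) = smul (exp_l sX) (exp_l sY) (Some (Node (Node (Leaf True) (Leaf True)) (Node (Leaf True) (Leaf True))))" by (simp add: evalrules tabs)
lemma pw71: "(exp_l (coef NORM) (Some (Node (Node (Leaf False) (Node (Leaf False) (Leaf False))) (Leaf False))) :: 'a::field_char_0) = smul (exp_l sX) (exp_l sY) (Some (Node (Node (Leaf False) (Node (Leaf False) (Leaf False))) (Leaf False)))" by (simp add: evalrules tabs)
lemma pw72: "(exp_l (coef NORM) (Some (Node (Node (Leaf False) (Node (Leaf False) (Leaf False))) (Leaf True))) :: 'a::field_char_0) = smul (exp_l sX) (exp_l sY) (Some (Node (Node (Leaf False) (Node (Leaf False) (Leaf False))) (Leaf True)))" by (simp add: evalrules tabs)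
lemma pw73: "(exp_l (coef NORM) (Some (Node (Node (Leaf False) (Node (Leaf False) (Leaf True))) (Leaf False))) :: 'a::field_char_0) = smul (exp_l sX) (exp_l sY) (Some (Node (Node (Leaf False) (Node (Leaf False) (Leaf True))) (Leaf False)))" by (simp add: evalrules tabs)
lemma pw74: "(exp_l (coef NORM) (Some (Node (Node (Leaf False) (Node (Leaf False) (Leaf True))) (Leaf True))) :: 'a::field_char_0) = smul (exp_l sX) (exp_l sY) (Some (Node (Node (Leaf False) (Node (Leaf False) (Leaf True))) (Leaf True)))" by (simp add: evalrules tabs)
lemma pw75: "(exp_l (coef NORM) (Some (Node (Node (Leaf False) (Node (Leaf True) (Leaf False))) (Leaf False))) :: 'a::field_char_0) = smul (exp_l sX) (exp_l sY) (Some (Node (Node (Leaf False) (Node (Leaf True) (Leaf False))) (Leaf False)))" by (simp add: evalrules tabs)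
lemma pw76: "(exp_l (coef NORM) (Some (Node (Node (Leaf False) (Node (Leaf True) (Leaf False))) (Leaf True))) :: 'a::field_char_0) = smul (exp_l sX) (exp_l sY) (Some (Node (Node (Leaf False) (Node (Leaf True) (Leaf False))) (Leaf True)))" by (simp add: evalrules tabs)
lemma pw77: "(exp_l (coef NORM) (Some (Node (Node (Leaf False) (Node (Leaf True) (Leaf True))) (Leaf False))) :: 'a::field_char_0) = smul (exp_l sX) (exp_l sY) (Some (Node (Node (Leaf False) (Node (Leaf True) (Leaf True))) (Leaf False)))" by (simp add: evalrules tabs)
lemma pw78: "(exp_l (coef NORM) (Some (Node (Node (Leaf False) (Node (Leaf True) (Leaf True))) (Leaf True))) :: 'a::field_char_0) = smul (exp_l sX) (exp_l sY) (Some (Node (Node (Leaf False) (Node (Leaf True) (Leaf True))) (Leaf True)))" by (simp add: evalrules tabs)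
lemma pw79: "(exp_l (coef NORM) (Some (Node (Node (Leaf True) (Node (Leaf False) (Leaf False))) (Leaf False))) :: 'a::field_char_0) = smul (exp_l sX) (exp_l sY) (Some (Node (Node (Leaf True) (Node (Leaf False) (Leaf False))) (Leaf False)))" by (simp add: evalrules tabs)
lemma pw80: "(exp_l (coef NORM) (Some (Node (Node (Leaf True) (Node (Leaf False) (Leaf False))) (Leaf True))) :: 'a::field_char_0) = smul (exp_l sX) (exp_l sY) (Some (Node (Node (Leaf True) (Node (Leaf False) (Leaf False))) (Leaf True)))" by (simp add: evalrules tabs)
lemma pw81: "(exp_l (coef NORM) (Some (Node (Node (Leaf True) (Node (Leaf False) (Leaf True))) (Leaf False))) :: 'a::field_char_0) = smul (exp_l sX) (exp_l sY) (Some (Node (Node (Leaf True) (Node (Leaf False) (Leaf True))) (Leaf False)))" by (simp add: evalrules tabs)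
lemma pw82: "(exp_l (coef NORM) (Some (Node (Node (Leaf True) (Node (Leaf False) (Leaf True))) (Leaf True))) :: 'a::field_char_0) = smul (exp_l sX) (exp_l sY) (Some (Node (Node (Leaf True) (Node (Leaf False) (Leaf True))) (Leaf True)))" by (simp add: evalrules tabs)
lemma pw83: "(exp_l (coef NORM) (Some (Node (Node (Leaf True) (Node (Leaf True) (Leaf False))) (Leaf False))) :: 'a::field_char_0) = smul (exp_l sX) (exp_l sY) (Some (Node (Node (Leaf True) (Node (Leaf True) (Leaf False))) (Leaf False)))" by (simp add: evalrules tabs)
lemma pw84: "(exp_l (coef NORM) (Some (Node (Node (Leaf True) (Node (Leaf True) (Leaf False))) (Leaf True))) :: 'a::field_char_0) = smul (exp_l sX) (exp_l sY) (Some (Node (Node (Leaf True) (Node (Leaf True) (Leaf False))) (Leaf True)))" by (simp add: evalrules tabs)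
lemma pw85: "(exp_l (coef NORM) (Some (Node (Node (Leaf True) (Node (Leaf True) (Leaf True))) (Leaf False))) :: 'a::field_char_0) = smul (exp_l sX) (exp_l sY) (Some (Node (Node (Leaf True) (Node (Leaf True) (Leaf True))) (Leaf False)))" by (simp add: evalrules tabs)
lemma pw86: "(exp_l (coef NORM) (Some (Node (Node (Leaf True) (Node (Leaf True) (Leaf True))) (Leaf True))) :: 'a::field_char_0) = smul (exp_l sX) (exp_l sY) (Some (Node (Node (Leaf True) (Node (Leaf True) (Leaf True))) (Leaf True)))" by (simp add: evalrules tabs)
lemma pw87: "(exp_l (coef NORM) (Some (Node (Node (Node (Leaf False) (Leaf False)) (Leaf False)) (Leaf False))) :: 'a::field_char_0) = smul (exp_l sX) (exp_l sY) (Some (Node (Node (Node (Leaf False) (Leaf False)) (Leaf False)) (Leaf False)))" by (simp add: evalrules tabs)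
lemma pw88: "(exp_l (coef NORM) (Some (Node (Node (Node (Leaf False) (Leaf False)) (Leaf False)) (Leaf True))) :: 'a::field_char_0) = smul (exp_l sX) (exp_l sY) (Some (Node (Node (Node (Leaf False) (Leaf False)) (Leaf False)) (Leaf True)))" by (simp add: evalrules tabs)
lemma pw89: "(exp_l (coef NORM) (Some (Node (Node (Node (Leaf False) (Leaf False)) (Leaf True)) (Leaf False))) :: 'a::field_char_0) = smul (exp_l sX) (exp_l sY) (Some (Node (Node (Node (Leaf False) (Leaf False)) (Leaf True)) (Leaf False)))" by (simp add: evalrules tabs)
lemma pw90: "(exp_l (coef NORM) (Some (Node (Node (Node (Leaf False) (Leaf False)) (Leaf True)) (Leaf True))) :: 'a::field_char_0) = smul (exp_l sX) (exp_l sY) (Some (Node (Node (Node (Leaf False) (Leaf False)) (Leaf True)) (Leaf True)))" by (simp add: evalrules tabs)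
lemma pw91: "(exp_l (coef NORM) (Some (Node (Node (Node (Leaf False) (Leaf True)) (Leaf False)) (Leaf False))) :: 'a::field_char_0) = smul (exp_l sX) (exp_l sY) (Some (Node (Node (Node (Leaf False) (Leaf True)) (Leaf False)) (Leaf False)))" by (simp add: evalrules tabs)
lemma pw92: "(exp_l (coef NORM) (Some (Node (Node (Node (Leaf False) (Leaf True)) (Leaf False)) (Leaf True))) :: 'a::field_char_0) = smul (exp_l sX) (exp_l sY) (Some (Node (Node (Node (Leaf False) (Leaf True)) (Leaf False)) (Leaf True)))" by (simp add: evalrules tabs)
lemma pw93: "(exp_l (coef NORM) (Some (Node (Node (Node (Leaf False) (Leaf True)) (Leaf True)) (Leaf False))) :: 'a::field_char_0) = smul (exp_l sX) (exp_l sY) (Some (Node (Node (Node (Leaf False) (Leaf True)) (Leaf True)) (Leaf False)))" by (simp add: evalrules tabs)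
lemma pw94: "(exp_l (coef NORM) (Some (Node (Node (Node (Leaf False) (Leaf True)) (Leaf True)) (Leaf True))) :: 'a::field_char_0) = smul (exp_l sX) (exp_l sY) (Some (Node (Node (Node (Leaf False) (Leaf True)) (Leaf True)) (Leaf True)))" by (simp add: evalrules tabs)
lemma pw95: "(exp_l (coef NORM) (Some (Node (Node (Node (Leaf True) (Leaf False)) (Leaf False)) (Leaf False))) :: 'a::field_char_0) = smul (exp_l sX) (exp_l sY) (Some (Node (Node (Node (Leaf True) (Leaf False)) (Leaf False)) (Leaf False)))" by (simp add: evalrules tabs)
lemma pw96: "(exp_l (coef NORM) (Some (Node (Node (Node (Leaf True) (Leaf False)) (Leaf False)) (Leaf True))) :: 'a::field_char_0) = smul (exp_l sX) (exp_l sY) (Some (Node (Node (Node (Leaf True) (Leaf False)) (Leaf False)) (Leaf True)))" by (simp add: evalrules tabs)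
lemma pw97: "(exp_l (coef NORM) (Some (Node (Node (Node (Leaf True) (Leaf False)) (Leaf True)) (Leaf False))) :: 'a::field_char_0) = smul (exp_l sX) (exp_l sY) (Some (Node (Node (Node (Leaf True) (Leaf False)) (Leaf True)) (Leaf False)))" by (simp add: evalrules tabs)
lemma pw98: "(exp_l (coef NORM) (Some (Node (Node (Node (Leaf True) (Leaf False)) (Leaf True)) (Leaf True))) :: 'a::field_char_0) = smul (exp_l sX) (exp_l sY) (Some (Node (Node (Node (Leaf True) (Leaf False)) (Leaf True)) (Leaf True)))" by (simp add: evalrules tabs)
lemma pw99: "(exp_l (coef NORM) (Some (Node (Node (Node (Leaf True) (Leaf True)) (Leaf False)) (Leaf False))) :: 'a::field_char_0) = smul (exp_l sX) (exp_l sY) (Some (Node (Node (Node (Leaf True) (Leaf True)) (Leaf False)) (Leaf False)))" by (simp add: evalrules tabs)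
lemma pw100: "(exp_l (coef NORM) (Some (Node (Node (Node (Leaf True) (Leaf True)) (Leaf False)) (Leaf True))) :: 'a::field_char_0) = smul (exp_l sX) (exp_l sY) (Some (Node (Node (Node (Leaf True) (Leaf True)) (Leaf False)) (Leaf True)))" by (simp add: evalrules tabs)
lemma pw101: "(exp_l (coef NORM) (Some (Node (Node (Node (Leaf True) (Leaf True)) (Leaf True)) (Leaf False))) :: 'a::field_char_0) = smul (exp_l sX) (exp_l sY) (Some (Node (Node (Node (Leaf True) (Leaf True)) (Leaf True)) (Leaf False)))" by (simp add: evalrules tabs)
lemma pw102: "(exp_l (coef NORM) (Some (Node (Node (Node (Leaf True) (Leaf True)) (Leaf True)) (Leaf True))) :: 'a::field_char_0) = smul (exp_l sX) (exp_l sY) (Some (Node (Node (Node (Leaf True) (Leaf True)) (Leaf True)) (Leaf True)))" by (simp add: evalrules tabs)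
lemmas pws = pw1 pw2 pw3 pw4 pw5 pw6 pw7 pw8 pw9 pw10 pw11 pw12 pw13 pw14 pw15 pw16 pw17 pw18 pw19 pw20 pw21 pw22 pw23 pw24 pw25 pw26 pw27 pw28 pw29 pw30 pw31 pw32 pw33 pw34 pw35 pw36 pw37 pw38 pw39 pw40 pw41 pw42 pw43 pw44 pw45 pw46 pw47 pw48 pw49 pw50 pw51 pw52 pw53 pw54 pw55 pw56 pw57 pw58 pw59 pw60 pw61 pw62 pw63 pw64 pw65 pw66 pw67 pw68 pw69 pw70 pw71 pw72 pw73 pw74 pw75 pw76 pw77 pw78 pw79 pw80 pw81 pw82 pw83 pw84 pw85 pw86 pw87 pw88 pw89 pw90 pw91 pw92 pw93 pw94 pw95 pw96 pw97 pw98 pw99 pw100 pw101 pw102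


lemma D1: "nleaves s = 1 \<Longrightarrow> s = Leaf False \<or> s = Leaf True"
proof (cases s)
  case (Leaf x) then show ?thesis by (cases x) auto
next
  case (Node a b) assume "nleaves s = 1" then show ?thesis using nleaves_pos[of a] nleaves_pos[of b] Node by simp
qed
lemma D2: "nleaves s = 2 \<Longrightarrow> s = Node (Leaf False) (Leaf False) \<or> s = Node (Leaf False) (Leaf True) \<or> s = Node (Leaf True) (Leaf False) \<or> s = Node (Leaf True) (Leaf True)"
proof (cases s)
  case (Leaf x) assume "nleaves s = 2" then show ?thesis using Leaf by simp
next
  case (Node a b) assume "nleaves s = 2"
  then have "nleaves a = 1" "nleaves b = 1" using nleaves_pos[of a] nleaves_pos[of b] Node by simp_all
  from D1[OF this(1)] D1[OF this(2)] show ?thesis unfolding Node by (elim disjE) simp_all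
qed
lemma D3: "nleaves s = 3 \<Longrightarrow> s = Node (Leaf False) (Node (Leaf False) (Leaf False)) \<or> s = Node (Leaf False) (Node (Leaf False) (Leaf True)) \<or> s = Node (Leaf False) (Node (Leaf True) (Leaf False)) \<or> s = Node (Leaf False) (Node (Leaf True) (Leaf True)) \<or> s = Node (Leaf True) (Node (Leaf False) (Leaf False)) \<or> s = Node (Leaf True) (Node (Leaf False) (Leaf True)) \<or> s = Node (Leaf True) (Node (Leaf True) (Leaf False)) \<or> s = Node (Leaf True) (Node (Leaf True) (Leaf True)) \<or> s = Node (Node (Leaf False) (Leaf False)) (Leaf False) \<or> s = Node (Node (Leaf False) (Leaf False)) (Leaf True) \<or> s = Node (Node (Leaf False) (Leaf True)) (Leaf False) \<or> s = Node (Node (Leaf False) (Leaf True)) (Leaf True) \<or> s = Node (Node (Leaf True) (Leaf False)) (Leaf False) \<or> s = Node (Node (Leaf True) (Leaf False)) (Leaf True) \<or> s = Node (Node (Leaf True) (Leaf True)) (Leaf False) \<or> s = Node (Node (Leaf True) (Leaf True)) (Leaf True)"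
proof (cases s)
  case (Leaf x) assume "nleaves s = 3" then show ?thesis using Leaf by simp
next
  case (Node a b) assume "nleaves s = 3"
  then have "(nleaves a = 1 \<and> nleaves b = 2) \<or> (nleaves a = 2 \<and> nleaves b = 1)"
    using nleaves_pos[of a] nleaves_pos[of b] Node by auto
  then show ?thesis
  proof
    assume h: "nleaves a = 1 \<and> nleaves b = 2"
    from D1[OF conjunct1[OF h]] D2[OF conjunct2[OF h]] show ?thesis unfolding Node by (elim disjE) simp_all
  next
    assume h: "nleaves a = 2 \<and> nleaves b = 1"
    from D2[OF conjunct1[OF h]] D1[OF conjunct2[OF h]] show ?thesis unfolding Node by (elim disjE) simp_all
  qed
qed

lemma P1: "nleaves s = 1 \<Longrightarrow> (exp_l (coef NORM) (Some s) :: 'a::field_char_0) = smul (exp_l sX) (exp_l sY) (Some s)"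
  by (drule D1) (elim disjE; simp only: pws)
lemma P2: "nleaves s = 2 \<Longrightarrow> (exp_l (coef NORM) (Some s) :: 'a::field_char_0) = smul (exp_l sX) (exp_l sY) (Some s)"
  by (drule D2) (elim disjE; simp only: pws)
lemma P3: "nleaves s = 3 \<Longrightarrow> (exp_l (coef NORM) (Some s) :: 'a::field_char_0) = smul (exp_l sX) (exp_l sY) (Some s)"
  by (drule D3) (elim disjE; simp only: pws)
lemma P4: "nleaves s = 4 \<Longrightarrow> (exp_l (coef NORM) (Some s) :: 'a::field_char_0) = smul (exp_l sX) (exp_l sY) (Some s)"
proof (cases s)
  case (Leaf x) assume "nleaves s = 4" then show ?thesis using Leaf by simp
next
  case (Node a b) assume "nleaves s = 4"
  then have "(nleaves a = 1 \<and> nleaves b = 3) \<or> (nleaves a = 2 \<and> nleaves b = 2) \<or> (nleaves a = 3 \<and> nleaves b = 1)"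
    using nleaves_pos[of a] nleaves_pos[of b] Node by auto
  then show ?thesis
  proof (elim disjE)
    assume h: "nleaves a = 1 \<and> nleaves b = 3"
    from D1[OF conjunct1[OF h]] D3[OF conjunct2[OF h]] show ?thesis unfolding Node by (elim disjE; simp only: pws)
  next
    assume h: "nleaves a = 2 \<and> nleaves b = 2"
    from D2[OF conjunct1[OF h]] D2[OF conjunct2[OF h]] show ?thesis unfolding Node by (elim disjE; simp only: pws)
  next
    assume h: "nleaves a = 3 \<and> nleaves b = 1"
    from D3[OF conjunct1[OF h]] D1[OF conjunct2[OF h]] show ?thesis unfolding Node by (elim disjE; simp only: pws)
  qed
qed
lemma Pall: "nleaves s \<le> 4 \<Longrightarrow> (exp_l (coef NORM) (Some s) :: 'a::field_char_0) = smul (exp_l sX) (exp_l sY) (Some s)"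
proof -
  assume "nleaves s \<le> 4"
  then have "nleaves s = 1 \<or> nleaves s = 2 \<or> nleaves s = 3 \<or> nleaves s = 4" using nleaves_pos[of s] by arith
  then show ?thesis using P1[of s] P2[of s] P3[of s] P4[of s] by blast
qed

theorem mainTheorem7:
  fixes w :: "bool word"
  assumes "wdeg w \<le> 4"
  shows "(log_l (smul (exp_l sX) (exp_l sY)) w :: 'a :: field_char_0) =
    slin [(1, sX), (1, sY), (1/2, scomm sX sY),
      (1/12, scomm sX (scomm sX sY)), (-1/3, angle [sX] sX sY),
      (-1/12, scomm sY (scomm sX sY)), (-1/6, angle [sY] sX sY), (-1/2, Phi [sX] [sY, sY]),
      (-1/24, angle [sX] sX (scomm sX sY)), (-1/12, scomm sX (angle [sX] sX sY)),
      (-1/8, angle [sX, sX] sX sY),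
      (1/24, scomm (scomm sX (scomm sX sY)) sY), (-1/24, scomm sX (angle [sY] sX sY)),
      (-1/4, Phi [sX, sX] [sY, sY]), (-1/4, scomm sX (Phi [sX] [sY, sY])),
      (-1/24, scomm (angle [sX] sX sY) sY), (-1/24, angle [sX] (scomm sX sY) sY),
      (-1/6, angle [sX, sY] sX sY), (1/24, angle [sY, sX] sX sY),
      (1/12, scomm (Phi [sX] [sY, sY]) sY), (1/24, angle [sY] sY (scomm sX sY)),
      (-1/24, angle [sY, sY] sX sY), (-1/6, Phi [sX] [sY, sY, sY])]
    w"
  proof -
  have g1: "smul (exp_l sX) (exp_l sY) None = (1::'a)" by (simp add: smul_def exp_None)
  have R: "RHS = (coef NORM :: ('a,bool) ser)" by (rule RHS_NORM)
  have n0: "coef NORM None = (0::'a)" by (rule tab0)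
  show ?thesis
  proof (cases w)
    case None
    then show ?thesis using log_None[of "smul (exp_l sX) (exp_l sY) :: ('a,bool) ser", OF g1] n0 R
      unfolding RHS_def by simp
  next
    case (Some t)
    then have nt: "nleaves t \<le> 4" using assms by (simp add: wdeg_def)
    have "\<forall>s\<in>subs t. exp_l (coef NORM) (Some s) = smul (exp_l sX) (exp_l sY) (Some s :: bool word)"
      using nt subs_nleaves Pall order_trans by blast
    then have "log_l (smul (exp_l sX) (exp_l sY)) (Some t) = (coef NORM (Some t) :: 'a)"
      using log_char[of "smul (exp_l sX) (exp_l sY) :: ('a,bool) ser" "coef NORM" t, OF g1 n0] by blast
    then show ?thesis using Some R unfolding RHS_def by simp
  qed
qed

end
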